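(* Let $\gamma>0$, let $\Lambda(\boldsymbol Z,\boldsymbol n)$ be a rank-$r$ lattice in canonical form with $n=\prod_{i=1}^rn_i$ points, and let $\mathcal A(\boldsymbol Z,\boldsymbol n)=\{\boldsymbol h_{\boldsymbol\xi}:\boldsymbol\xi\in\mathbb Z_{n_1}\oplus\cdots\oplus\mathbb Z_{n_r}\}$ with $\boldsymbol Z^\top\boldsymbol h_{\boldsymbol\xi}\equiv\boldsymbol\xi\pmod{\boldsymbol n}$ be a full-cardinality anti-aliasing set chosen with minimal $\ell_2$ norm: $\|\boldsymbol h_{\boldsymbol\xi}\|_2=\min\{\|\boldsymbol h'\|_2:\boldsymbol h'\in\mathbb Z^d,\ \boldsymbol Z^\top\boldsymbol h'\equiv\boldsymbol\xi\pmod{\boldsymbol n}\}$. Let $v\in E_\alpha(\mathbb T^d)$ and $g\in E_\beta(\mathbb T^d)$, $\beta\ge2$. Let $D=\frac\gamma2D_{\boldsymbol n}$, $W=\frac1\gamma W_{\boldsymbol n}$. Then: (i) If $\alpha>5/2$, there is a constant $c_1$ independent of $\boldsymbol n$ and $\boldsymbol y$ (depending only on $d,\alpha,\gamma,v$) with $\|[D,W]\boldsymbol y\|_2\le c_1\|(D+I)\boldsymbol y\|_2$ for all $\boldsymbol y\in\mathbb R^n$. (ii) If $\alpha>9/2$, there is a constant $c_2$ independent of $\boldsymbol n$ and $\boldsymbol y$ (depending only on $d,\alpha,\gamma,v$) with $\|[D,[D,W]]\boldsymbol y\|_2\le c_2\|(D+I)^2\boldsymbol y\|_2$ for all $\boldsymbol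 y\in\mathbb R^n$.
   Context: Rank-$r$ lattice in canonical form: $\boldsymbol Z=(\boldsymbol z_1,\dots,\boldsymbol z_r)\in\mathbb Z^{d\times r}$, $\boldsymbol n=(n_1,\dots,n_r)\in\mathbb N^r$, $n_{i+1}\mid n_i$, the $\boldsymbol z_i$ linearly independent over $\mathbb Q$, components of $\boldsymbol z_i$ coprime to $n_i$; points $\boldsymbol p_{\boldsymbol k}=(\sum_i\boldsymbol z_ik_i/n_i)\bmod1$, $\boldsymbol k\in\mathbb Z_{n_1}\oplus\cdots\oplus\mathbb Z_{n_r}$, all distinct. Dual lattice $\Lambda^\perp=\{\boldsymbol h:\boldsymbol Z^\top\boldsymbol h\equiv\boldsymbol0\pmod{\boldsymbol n}\}$ (componentwise); an anti-aliasing set has no two distinct elements differing by an element of $\Lambda^\perp$; full cardinality means size $n$. Lexicographic enumeration: $\boldsymbol h^{(\chi)}=\boldsymbol h_{\boldsymbol\xi}$ with $\chi=\sum_{i=1}^r\xi_i\prod_{j>i}n_j$, and $\boldsymbol p^{(\kappa)}=\boldsymbol p_{\boldsymbol k}$ with $\kappa=\sum_{i=1}^rk_i\prod_{j>i}n_j$. Then $D_{\boldsymbol n}=\mathrm{diag}((4\pi^2\|\boldsymbol h^{(\chi)}\|_2^2)_{\chi=0}^{n-1})$, $V_{\boldsymbol n}=\mathrm{diag}((v(\boldsymbol p^{(\kappa)}))_{\kappa=0}^{n-1})$, $F_{\boldsymbol n}=\bigotimes_{i=1}^rF_{n_i}$ with $F_m=\frac1{\sqrt m}(\exp(-2\pi\mathrm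 i\,k\xi/m))_{\xi,k=0}^{m-1}$ the unitary Fourier matrix, and $W_{\boldsymbol n}=F_{\boldsymbol n}V_{\boldsymbol n}F_{\boldsymbol n}^{-1}$. $[A,B]=AB-BA$. Korobov space $E_\alpha(\mathbb T^d)=\{f\in L_2:\sum_{\boldsymbol h}|\widehat f(\boldsymbol h)|^2\prod_j\max(|h_j|^{2\alpha},1)<\infty\}$. *)

theory Defs
  imports "HOL-Analysis.Analysis" "Jordan_Normal_Form.Matrix" "HOL-Number_Theory.Cong"
begin

(* Korobov space E_alpha(T^d), described through the Fourier coefficients vhat :: int^'d => complex *)
definition korobov :: "real \<Rightarrow> (int^'d \<Rightarrow> complex) \<Rightarrow> bool" where
  "korobov \<alpha> fh \<longleftrightarrow>
     (\<lambda>h. (cmod (fh h))\<^sup>2 * (\<Prod>j\<in>UNIV. max (\<bar>real_of_int (h$j)\<bar> powr (2*\<alpha>)) 1)) summable_on UNIV"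

definition fourier_fun :: "(int^'d \<Rightarrow> complex) \<Rightarrow> real^'d \<Rightarrow> complex" where
  "fourier_fun fh x = (\<Sum>\<^sub>\<infinity>h. fh h * exp (2 * pi * \<i> * of_real (\<Sum>j\<in>UNIV. real_of_int (h$j) * x$j)))"

definition npts :: "nat list \<Rightarrow> nat" where
  "npts ns = prod_list ns"

definition radix :: "nat list \<Rightarrow> nat \<Rightarrow> nat" where
  "radix ns i = (\<Prod>j\<in>{Suc i..<length ns}. ns!j)"

(* i-th mixed-radix digit of chi, chi = sum_i xi_i prod_{j>i} n_j *)
definition digit :: "nat list \<Rightarrow> nat \<Rightarrow> nat \<Rightarrow> nat" where
  "digit ns c i = (c div radix ns i) mod (ns!i)"

definition canonical_lattice :: "(int^'d) list \<Rightarrow> nat list \<Rightarrow> bool" where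
  "canonical_lattice zs ns \<longleftrightarrow>
     length zs = length ns \<and>
     (\<forall>i<length ns. ns!i > 0) \<and>
     (\<forall>i. Suc i < length ns \<longrightarrow> ns!(Suc i) dvd ns!i) \<and>
     (\<forall>c :: nat \<Rightarrow> rat. (\<forall>j. (\<Sum>i<length zs. c i * of_int ((zs!i)$j)) = 0)
          \<longrightarrow> (\<forall>i<length zs. c i = 0)) \<and>
     (\<forall>i<length ns. \<forall>j. coprime ((zs!i)$j) (int (ns!i)))"

(* lattice point p_k with k given by its lexicographic index kappa *)
definition lattice_point :: "(int^'d) list \<Rightarrow> nat list \<Rightarrow> nat \<Rightarrow> real^'d" where
  "lattice_point zs ns \<kappa> =
     (\<chi> j. frac (\<Sum>i<length ns. real_of_int ((zs!i)$j) * real (digit ns \<kappa> i) / real (ns!i)))"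

definition points_distinct :: "(int^'d) list \<Rightarrow> nat list \<Rightarrow> bool" where
  "points_distinct zs ns \<longleftrightarrow>
     (\<forall>\<kappa><npts ns. \<forall>\<kappa>'<npts ns. \<kappa> \<noteq> \<kappa>' \<longrightarrow> lattice_point zs ns \<kappa> \<noteq> lattice_point zs ns \<kappa>')"

definition idot :: "int^'d \<Rightarrow> int^'d \<Rightarrow> int" where
  "idot a b = (\<Sum>j\<in>UNIV. a$j * b$j)"

definition isqnorm :: "int^'d \<Rightarrow> int" where
  "isqnorm h = (\<Sum>j\<in>UNIV. (h$j)^2)"

definition dual_lattice :: "(int^'d) list \<Rightarrow> nat list \<Rightarrow> (int^'d) set" where
  "dual_lattice zs ns = {h. \<forall>i<length ns. [idot (zs!i) h = 0] (mod int (ns!i))}"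

definition anti_aliasing :: "(int^'d) list \<Rightarrow> nat list \<Rightarrow> (int^'d) set \<Rightarrow> bool" where
  "anti_aliasing zs ns A \<longleftrightarrow>
     (\<forall>a\<in>A. \<forall>b\<in>A. a \<noteq> b \<longrightarrow> a - b \<notin> dual_lattice zs ns)"

(* Z^T h = xi (mod n), xi given by its lexicographic index chi *)
definition represents :: "(int^'d) list \<Rightarrow> nat list \<Rightarrow> nat \<Rightarrow> int^'d \<Rightarrow> bool" where
  "represents zs ns c h \<longleftrightarrow>
     (\<forall>i<length ns. [idot (zs!i) h = int (digit ns c i)] (mod int (ns!i)))"

definition min_anti_aliasing :: "(int^'d) list \<Rightarrow> nat list \<Rightarrow> (nat \<Rightarrow> int^'d) \<Rightarrow> bool" where
  "min_anti_aliasing zs ns hs \<longleftrightarrow>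
     anti_aliasing zs ns (hs ` {..<npts ns}) \<and>
     card (hs ` {..<npts ns}) = npts ns \<and>
     (\<forall>c<npts ns. represents zs ns c (hs c) \<and>
        (\<forall>h'. represents zs ns c h' \<longrightarrow> isqnorm (hs c) \<le> isqnorm h'))"

definition fourier_mat :: "nat \<Rightarrow> complex mat" where
  "fourier_mat m = mat m m (\<lambda>(\<xi>,k).
     exp (- 2 * pi * \<i> * of_nat k * of_nat \<xi> / of_nat m) / of_real (sqrt (real m)))"

definition kron :: "complex mat \<Rightarrow> complex mat \<Rightarrow> complex mat" where
  "kron A B = mat (dim_row A * dim_row B) (dim_col A * dim_col B)
     (\<lambda>(i,j). A $$ (i div dim_row B, j div dim_col B) * B $$ (i mod dim_row B, j mod dim_col B))"

definition F_mat :: "nat list \<Rightarrow> complex mat" where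
  "F_mat ns = foldr (\<lambda>m acc. kron (fourier_mat m) acc) ns (1\<^sub>m 1)"

definition mat_inv :: "nat \<Rightarrow> complex mat \<Rightarrow> complex mat" where
  "mat_inv n A = (THE B. B \<in> carrier_mat n n \<and> A * B = 1\<^sub>m n \<and> B * A = 1\<^sub>m n)"

definition D_mat :: "nat list \<Rightarrow> (nat \<Rightarrow> int^'d) \<Rightarrow> complex mat" where
  "D_mat ns hs = mat_diag (npts ns) (\<lambda>ch. of_real (4 * pi\<^sup>2 * real_of_int (isqnorm (hs ch))))"

definition V_mat :: "(int^'d) list \<Rightarrow> nat list \<Rightarrow> (int^'d \<Rightarrow> complex) \<Rightarrow> complex mat" where
  "V_mat zs ns vh = mat_diag (npts ns) (\<lambda>\<kappa>. fourier_fun vh (lattice_point zs ns \<kappa>))"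

definition W_mat :: "(int^'d) list \<Rightarrow> nat list \<Rightarrow> (int^'d \<Rightarrow> complex) \<Rightarrow> complex mat" where
  "W_mat zs ns vh = F_mat ns * V_mat zs ns vh * mat_inv (npts ns) (F_mat ns)"

definition commut :: "complex mat \<Rightarrow> complex mat \<Rightarrow> complex mat" where
  "commut A B = A * B - B * A"

definition vnorm2 :: "complex vec \<Rightarrow> real" where
  "vnorm2 x = sqrt (\<Sum>i<dim_vec x. (cmod (x $ i))\<^sup>2)"

end

theory Submission
  imports Defs
begin


lemma summable_nat_powr1:
  assumes "p > 1"
  shows "(\<lambda>n::nat. (1 + real n) powr (-p)) summable_on UNIV"
proof -
  have "summable (\<lambda>n. real n powr (-p))" using summable_real_powr_iff assms by simp
  then have "summable (\<lambda>n. real (Suc n) powr (-p))"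
    using summable_Suc_iff[of "\<lambda>n. real n powr (-p)"] by simp
  then have "summable (\<lambda>n. (1 + real n) powr (-p))" by (simp add: add.commute)
  then show ?thesis by (subst summable_on_UNIV_nonneg_real_iff) auto
qed

lemma summable_int_powr1:
  assumes "p > 1"
  shows "(\<lambda>t::int. (1 + real_of_int \<bar>t\<bar>) powr (-p)) summable_on UNIV"
proof -
  let ?f = "\<lambda>t::int. (1 + real_of_int \<bar>t\<bar>) powr (-p)"
  have U0: "t \<in> range int \<union> range (\<lambda>n. - int (Suc n))" for t :: int
  proof (cases "t \<ge> 0")
    case True
    then have "t = int (nat t)" by simp
    then show ?thesis by blast
  next
    case False
    then have "t = - int (Suc (nat (-t-1)))" by simp
    then show ?thesis by blast
  qed
  then have U: "UNIV = range int \<union> range (\<lambda>n. - int (Suc n))" by blast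
  have 1: "?f summable_on range int"
    by (subst summable_on_reindex) (auto simp: o_def intro: summable_nat_powr1[OF assms])
  have 2: "?f summable_on range (\<lambda>n. - int (Suc n))"
  proof (subst summable_on_reindex)
    show "inj_on (\<lambda>n. - int (Suc n)) UNIV" by (auto simp: inj_on_def)
    show "(?f \<circ> (\<lambda>n. - int (Suc n))) summable_on UNIV"
    proof (rule summable_on_comparison_test[OF summable_nat_powr1[OF assms]])
      fix n :: nat
      show "(?f \<circ> (\<lambda>n. - int (Suc n))) n \<le> (1 + real n) powr (-p)"
        using assms by (auto simp: o_def intro!: powr_mono2')
      show "0 \<le> (?f \<circ> (\<lambda>n. - int (Suc n))) n" by simp
    qed
  qed
  have "?f summable_on (range int \<union> range (\<lambda>n. - int (Suc n)))"
    by (rule summable_on_Un_disjoint[OF 1 2]) auto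
  then show ?thesis using U by simp
qed


definition gk :: "nat \<Rightarrow> real \<Rightarrow> int \<Rightarrow> real" where
  "gk k \<alpha> t = (1 + 2 * (real_of_int t)\<^sup>2)^(2*k) / max (\<bar>real_of_int t\<bar> powr (2*\<alpha>)) 1"

lemma gk_nonneg: "gk k \<alpha> t \<ge> 0"
  unfolding gk_def by (intro divide_nonneg_pos) auto

lemma gk_bound:
  assumes "\<alpha> > 0"
  shows "gk k \<alpha> t \<le> (2^(2*k) * 2 powr (2*\<alpha>)) * (1 + real_of_int \<bar>t\<bar>) powr (-(2*\<alpha> - 4 * real k))"
proof -
  define x where "x = \<bar>real_of_int t\<bar>"
  define a where "a = 1 + x"
  have x0: "x \<ge> 0" unfolding x_def by simp
  have a1: "a \<ge> 1" unfolding a_def using x0 by simp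
  have t2: "(real_of_int t)\<^sup>2 = x\<^sup>2" unfolding x_def by simp
  have n1: "1 + 2 * (real_of_int t)\<^sup>2 \<le> 2 * a^2"
    unfolding t2 a_def using x0 by (simp add: power2_eq_square algebra_simps)
  have n2: "(1 + 2 * (real_of_int t)\<^sup>2)^(2*k) \<le> (2 * a^2)^(2*k)"
    using n1 by (intro power_mono) auto
  have p1: "a powr (real (4*k)) = a^(4*k)" using a1 by (intro powr_realpow) auto
  have p2: "(2 * a^2)^(2*k) = 2^(2*k) * a^(4*k)"
  proof -
    have "(2 * a^2)^(2*k) = 2^(2*k) * (a^2)^(2*k)" by (rule power_mult_distrib)
    also have "(a^2)^(2*k) = a^(4*k)" by (simp only: power_mult[symmetric]) simp
    finally show ?thesis .
  qed
  have n3: "(2 * a^2)^(2*k) = 2^(2*k) * a powr (4 * real k)"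
    using p1 p2 by simp
  have m1: "(a/2) powr (2*\<alpha>) \<le> max (\<bar>real_of_int t\<bar> powr (2*\<alpha>)) 1"
  proof (cases "t = 0")
    case True
    then have "a/2 = 1/2" unfolding a_def x_def by simp
    then have "(a/2) powr (2*\<alpha>) \<le> 1" using assms by (simp add: powr_le1)
    then show ?thesis by simp
  next
    case False
    then have "\<bar>real_of_int t\<bar> \<ge> 1" by linarith
    then have "a/2 \<le> \<bar>real_of_int t\<bar>" unfolding a_def x_def by simp
    then have "(a/2) powr (2*\<alpha>) \<le> \<bar>real_of_int t\<bar> powr (2*\<alpha>)"
      using a1 assms by (intro powr_mono2) auto
    then show ?thesis by simp
  qed
  have mpos: "(a/2) powr (2*\<alpha>) > 0" using a1 by simp
  have "gk k \<alpha> t \<le> (2^(2*k) * a powr (4 * real k)) / ((a/2) powr (2*\<alpha>))"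
    unfolding gk_def by (rule frac_le) (use n2 n3 m1 mpos in auto)
  also have "(a/2) powr (2*\<alpha>) = a powr (2*\<alpha>) / 2 powr (2*\<alpha>)"
    using a1 by (simp add: powr_divide)
  also have "(2^(2*k) * a powr (4 * real k)) / (a powr (2*\<alpha>) / 2 powr (2*\<alpha>))
      = (2^(2*k) * 2 powr (2*\<alpha>)) * (a powr (4 * real k) / a powr (2*\<alpha>))"
    by (simp add: field_simps)
  also have "a powr (4 * real k) / a powr (2*\<alpha>) = a powr (-(2*\<alpha> - 4 * real k))"
    using a1 by (simp add: powr_diff[symmetric])
  finally show ?thesis unfolding a_def x_def by simp
qed

lemma gk_summable:
  assumes "2*\<alpha> - 4 * real k > 1"
  shows "gk k \<alpha> summable_on UNIV"
proof (rule summable_on_comparison_test)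
  have "\<alpha> > 0" using assms by simp
  show "(\<lambda>t. (2^(2*k) * 2 powr (2*\<alpha>)) * (1 + real_of_int \<bar>t\<bar>) powr (-(2*\<alpha> - 4 * real k))) summable_on UNIV"
    by (intro summable_on_cmult_right summable_int_powr1 assms)
  show "gk k \<alpha> t \<le> (2^(2*k) * 2 powr (2*\<alpha>)) * (1 + real_of_int \<bar>t\<bar>) powr (-(2*\<alpha> - 4 * real k))" for t
    using gk_bound[OF \<open>\<alpha> > 0\<close>] by blast
  show "0 \<le> gk k \<alpha> t" for t by (rule gk_nonneg)
qed

lemma summable_prod_vec:
  fixes g :: "int \<Rightarrow> real"
  assumes nn: "\<And>t. g t \<ge> 0" and sg: "g summable_on UNIV"
  shows "(\<lambda>h::int^'d. \<Prod>j\<in>UNIV. g (h$j)) summable_on UNIV"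
proof -
  have "Infinite_Sum.abs_summable_on g UNIV" using sg nn by simp
  then have g1: "Infinite_Set_Sum.abs_summable_on g UNIV" by (rule abs_summable_equivalent[THEN iffD1])
  have "Infinite_Set_Sum.abs_summable_on (\<lambda>f. \<Prod>x\<in>(UNIV::'d set). g (f x)) (PiE UNIV (\<lambda>_. UNIV))"
    by (rule abs_summable_on_prod_PiE) (use g1 in auto)
  then have "Infinite_Sum.abs_summable_on (\<lambda>f. \<Prod>x\<in>(UNIV::'d set). g (f x)) (PiE UNIV (\<lambda>_. UNIV))"
    by (rule abs_summable_equivalent[THEN iffD2])
  then have "Infinite_Sum.abs_summable_on (\<lambda>f. \<Prod>x\<in>(UNIV::'d set). g (f x)) UNIV"
    by (simp only: PiE_UNIV)
  then have P: "(\<lambda>f. \<Prod>x\<in>(UNIV::'d set). g (f x)) summable_on UNIV"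
    using nn by (simp add: prod_nonneg)
  have "range (vec_nth :: int^'d \<Rightarrow> 'd \<Rightarrow> int) = UNIV"
    by (metis surj_def vec_lambda_beta vec_lambda_eta ext)
  moreover have "inj (vec_nth :: int^'d \<Rightarrow> 'd \<Rightarrow> int)" by (simp add: inj_on_def vec_nth_inject)
  ultimately show ?thesis
    using P summable_on_reindex[of "vec_nth :: int^'d \<Rightarrow> 'd \<Rightarrow> int" UNIV "\<lambda>f. \<Prod>x\<in>(UNIV::'d set). g (f x)"]
    by (simp add: o_def)
qed

lemma one_plus_sum_le_prod:
  fixes x :: "'a \<Rightarrow> real"
  assumes "finite A" "\<And>i. i \<in> A \<Longrightarrow> x i \<ge> 0"
  shows "1 + (\<Sum>i\<in>A. x i) \<le> (\<Prod>i\<in>A. 1 + x i)"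
  using assms
proof (induction A rule: finite_induct)
  case empty then show ?case by simp
next
  case (insert a A)
  have xa: "x a \<ge> 0" using insert by simp
  have S: "(\<Sum>i\<in>A. x i) \<ge> 0" using insert by (simp add: sum_nonneg)
  have IH: "1 + (\<Sum>i\<in>A. x i) \<le> (\<Prod>i\<in>A. 1 + x i)" using insert by simp
  have "1 + (\<Sum>i\<in>insert a A. x i) = 1 + x a + (\<Sum>i\<in>A. x i)" using insert by simp
  also have "\<dots> \<le> (1 + x a) * (1 + (\<Sum>i\<in>A. x i))" using xa S by (simp add: algebra_simps)
  also have "\<dots> \<le> (1 + x a) * (\<Prod>i\<in>A. 1 + x i)" using IH xa by (intro mult_left_mono) auto
  finally show ?case using insert by simp
qed

definition Pw :: "real \<Rightarrow> int^'d \<Rightarrow> real" where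
  "Pw \<alpha> h = (\<Prod>j\<in>UNIV. max (\<bar>real_of_int (h$j)\<bar> powr (2*\<alpha>)) 1)"

lemma Pw_pos: "Pw \<alpha> h > 0"
  unfolding Pw_def by (intro prod_pos) auto

lemma weight_le_prod:
  "(1 + 2 * real_of_int (isqnorm h))^(2*k) / Pw \<alpha> h \<le> (\<Prod>j\<in>UNIV. gk k \<alpha> (h$j))"
proof -
  have "1 + 2 * real_of_int (isqnorm h) = 1 + (\<Sum>j\<in>UNIV. 2 * (real_of_int (h$j))\<^sup>2)"
    unfolding isqnorm_def by (simp add: sum_distrib_left)
  also have "\<dots> \<le> (\<Prod>j\<in>UNIV. 1 + 2 * (real_of_int (h$j))\<^sup>2)"
    by (rule one_plus_sum_le_prod) auto
  finally have 1: "(1 + 2 * real_of_int (isqnorm h))^(2*k) \<le> (\<Prod>j\<in>UNIV. 1 + 2 * (real_of_int (h$j))\<^sup>2)^(2*k)"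
    by (intro power_mono) (auto simp: isqnorm_def sum_nonneg)
  have "(1 + 2 * real_of_int (isqnorm h))^(2*k) / Pw \<alpha> h \<le> (\<Prod>j\<in>UNIV. 1 + 2 * (real_of_int (h$j))\<^sup>2)^(2*k) / Pw \<alpha> h"
    using 1 Pw_pos[of \<alpha> h] by (intro divide_right_mono) auto
  also have "\<dots> = (\<Prod>j\<in>UNIV. gk k \<alpha> (h$j))"
    unfolding Pw_def gk_def by (simp add: prod_power_distrib[symmetric] prod_dividef)
  finally show ?thesis .
qed

lemma korobov_weighted_summable:
  assumes "korobov \<alpha> vh" and "2*\<alpha> - 4 * real k > 1"
  shows "(\<lambda>h::int^'d. cmod (vh h) * (1 + 2 * real_of_int (isqnorm h))^k) summable_on UNIV"
proof -
  define x where "x h = cmod (vh h) * sqrt (Pw \<alpha> h)" for h :: "int^'d"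
  define y where "y h = (1 + 2 * real_of_int (isqnorm h))^k / sqrt (Pw \<alpha> h)" for h :: "int^'d"
  have xx: "x h * x h = (cmod (vh h))\<^sup>2 * Pw \<alpha> h" for h
    unfolding x_def using Pw_pos[of \<alpha> h] by (simp add: power2_eq_square)
  have yy: "y h * y h = (1 + 2 * real_of_int (isqnorm h))^(2*k) / Pw \<alpha> h" for h
  proof -
    have "y h * y h = ((1 + 2 * real_of_int (isqnorm h))^k)^2 / Pw \<alpha> h"
      unfolding y_def using Pw_pos[of \<alpha> h] by (simp add: power2_eq_square[symmetric] power_divide)
    also have "((1 + 2 * real_of_int (isqnorm h))^k)^2 = (1 + 2 * real_of_int (isqnorm h))^(2*k)"
      by (metis power_mult mult.commute)
    finally show ?thesis .
  qed
  have ynn: "0 \<le> (1 + 2 * real_of_int (isqnorm h))^(2*k) / Pw \<alpha> h" for h :: "int^'d"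
    using Pw_pos[of \<alpha> h] by (intro divide_nonneg_pos) (auto simp: isqnorm_def sum_nonneg)
  have s1: "(\<lambda>h. norm (x h * x h)) summable_on UNIV"
    using assms(1) unfolding korobov_def xx Pw_def
    by (simp add: abs_mult prod_nonneg)
  have s2: "(\<lambda>h. norm (y h * y h)) summable_on UNIV"
  proof (rule summable_on_comparison_test)
    show "(\<lambda>h::int^'d. \<Prod>j\<in>UNIV. gk k \<alpha> (h$j)) summable_on UNIV"
      by (rule summable_prod_vec[OF gk_nonneg gk_summable[OF assms(2)]])
    show "norm (y h * y h) \<le> (\<Prod>j\<in>UNIV. gk k \<alpha> (h$j))" for h
      using weight_le_prod[of h k \<alpha>] ynn[of h] unfolding yy by simp
  qed auto
  have "(\<lambda>h. norm (x h * y h)) summable_on UNIV"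
    by (rule abs_summable_product[OF s1 s2])
  moreover have "norm (x h * y h) = cmod (vh h) * (1 + 2 * real_of_int (isqnorm h))^k" for h
    unfolding x_def y_def using Pw_pos[of \<alpha> h]
    by (simp add: abs_mult isqnorm_def sum_nonneg)
  ultimately show ?thesis by simp
qed




definition e :: "real \<Rightarrow> complex" where
  "e t = exp (2 * pi * \<i> * complex_of_real t)"

lemma e_add: "e (x + y) = e x * e y"
  unfolding e_def by (simp add: distrib_left exp_add)

lemma e_zero[simp]: "e 0 = 1" unfolding e_def by simp

lemma e_int: "e (real_of_int k) = 1"
proof -
  have "exp (2 * pi * \<i> * complex_of_real (real_of_int k)) = 1"
    by (subst exp_eq_1) (simp add: mult.commute)
  then show ?thesis unfolding e_def .
qed

lemma e_eq_1D: "e x = 1 \<Longrightarrow> \<exists>k::int. x = real_of_int k"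
proof -
  assume "e x = 1"
  then have "exp (2 * pi * \<i> * complex_of_real x) = 1" unfolding e_def .
  then obtain n :: int where "Im (2 * pi * \<i> * complex_of_real x) = of_int (2 * n) * pi"
    by (subst (asm) exp_eq_1) auto
  then have "2 * pi * x = 2 * real_of_int n * pi" by simp
  then have "x = real_of_int n" by simp
  then show ?thesis by blast
qed

lemma e_cnj: "cnj (e x) = e (-x)"
  unfolding e_def by (simp add: exp_cnj)

lemma norm_e[simp]: "norm (e x) = 1"
  unfolding e_def by (simp add: norm_exp_eq_Re)

lemma e_mult_nat: "e (real n * x) = e x ^ n"
proof -
  have "exp (2 * pi * \<i> * complex_of_real (real n * x)) = exp (of_nat n * (2 * pi * \<i> * complex_of_real x))"
    by (simp add: mult_ac)
  then show ?thesis unfolding e_def by (simp only: exp_of_nat_mult)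
qed

lemma e_sum: "finite A \<Longrightarrow> e (\<Sum>i\<in>A. f i) = (\<Prod>i\<in>A. e (f i))"
  by (induction A rule: finite_induct) (simp_all add: e_add)

lemma char_sum_1d:
  assumes "m > 0"
  shows "(\<Sum>x<m. e (real_of_int a * real x / real m)) = (if int m dvd a then of_nat m else 0)"
proof -
  define z where "z = e (real_of_int a / real m)"
  have zx: "e (real_of_int a * real x / real m) = z ^ x" for x
    unfolding z_def using e_mult_nat[of x "real_of_int a / real m"] by (simp add: mult.commute)
  have zm: "z ^ m = 1"
    unfolding z_def using e_mult_nat[of m "real_of_int a / real m"] assms e_int[of a] by simp
  show ?thesis
  proof (cases "int m dvd a")
    case True
    then obtain c where c: "a = int m * c" by blast
    have "z = 1" unfolding z_def c using assms e_int[of c] by simp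
    then show ?thesis using True zx by simp
  next
    case False
    have "z \<noteq> 1"
    proof
      assume "z = 1"
      then obtain k :: int where "real_of_int a / real m = real_of_int k"
        unfolding z_def using e_eq_1D by blast
      then have "real_of_int a = real m * real_of_int k" using assms by (simp add: field_simps)
      then have "a = int m * k" by (metis of_int_eq_iff of_int_mult of_int_of_nat_eq)
      then show False using False by simp
    qed
    then have "(\<Sum>x<m. z ^ x) = 0" using zm by (simp add: sum_gp_strict)
    then show ?thesis using False zx by simp
  qed
qed

definition posl :: "nat list \<Rightarrow> bool" where
  "posl ns \<longleftrightarrow> (\<forall>i<length ns. ns!i > 0)"

lemma posl_Cons: "posl (m#ns) \<longleftrightarrow> m > 0 \<and> posl ns"
  unfolding posl_def by (auto simp: nth_Cons' less_Suc_eq_0_disj)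

lemma npts_Nil[simp]: "npts [] = 1" by (simp add: npts_def)
lemma npts_Cons: "npts (m#ns) = m * npts ns" by (simp add: npts_def)

lemma npts_pos: "posl ns \<Longrightarrow> npts ns > 0"
  by (induction ns) (auto simp: npts_Cons posl_Cons)

lemma prod_list_nth: "(\<Prod>j\<in>{0..<length ns}. ns!j) = prod_list ns"
proof (induction ns)
  case Nil then show ?case by simp
next
  case (Cons m ns)
  show ?case by (simp only: length_Cons prod.atLeast0_lessThan_Suc_shift) (simp add: Cons)
qed

lemma radix_Cons0: "radix (m#ns) 0 = npts ns"
  unfolding radix_def npts_def
  by (simp only: length_Cons prod.shift_bounds_Suc_ivl nth_Cons_Suc prod_list_nth)

lemma radix_Cons_Suc: "radix (m#ns) (Suc i) = radix ns i"
  unfolding radix_def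
  by (simp only: length_Cons prod.shift_bounds_Suc_ivl nth_Cons_Suc)

lemma digit_Cons0: "c < m * npts ns \<Longrightarrow> digit (m#ns) c 0 = c div npts ns"
  unfolding digit_def radix_Cons0
  by (simp add: less_mult_imp_div_less mult.commute)

lemma radix_dvd:
  assumes "i < length ns"
  shows "radix ns i * ns!i dvd npts ns"
proof -
  have "radix ns i * ns!i = (\<Prod>j\<in>{i..<length ns}. ns!j)"
    unfolding radix_def using assms by (simp add: prod.atLeast_Suc_lessThan)
  moreover have "npts ns = (\<Prod>j\<in>{0..<i}. ns!j) * (\<Prod>j\<in>{i..<length ns}. ns!j)"
    unfolding npts_def prod_list_nth[symmetric] using assms
    by (simp add: prod.atLeastLessThan_concat)
  ultimately show ?thesis by simp
qed

lemma div_mod_digit: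
  fixes c R n M :: nat
  assumes "R * n dvd M"
  shows "(c mod M) div R mod n = c div R mod n"
proof (cases "R = 0")
  case True then show ?thesis by simp
next
  case False
  obtain Q where M: "M = R * (n * Q)" using assms by (metis dvdE mult.assoc)
  have "c mod M = R * (c div R mod (n * Q)) + c mod R"
    unfolding M by (rule mod_mult2_eq)
  then have "(c mod M) div R = c div R mod (n * Q)"
    using False by simp
  then show ?thesis by (simp add: mod_mod_cancel)
qed

lemma digit_Cons_Suc:
  assumes "i < length ns"
  shows "digit (m#ns) c (Suc i) = digit ns (c mod npts ns) i"
  unfolding digit_def radix_Cons_Suc nth_Cons_Suc
  using div_mod_digit[OF radix_dvd[OF assms]] by simp

lemma digit_less: "posl ns \<Longrightarrow> i < length ns \<Longrightarrow> digit ns c i < ns!i"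
  unfolding digit_def posl_def by simp

lemma digit_inj:
  assumes "posl ns" "c < npts ns" "c' < npts ns" "\<forall>i<length ns. digit ns c i = digit ns c' i"
  shows "c = c'"
  using assms
proof (induction ns arbitrary: c c')
  case Nil then show ?case by simp
next
  case (Cons m ns)
  have p: "posl ns" "m > 0" using Cons.prems posl_Cons by auto
  have "digit (m#ns) c 0 = digit (m#ns) c' 0" using Cons.prems(4) by simp
  then have d0: "c div npts ns = c' div npts ns"
    using digit_Cons0 Cons.prems(2,3) by (simp add: npts_Cons)
  have "\<forall>i<length ns. digit ns (c mod npts ns) i = digit ns (c' mod npts ns) i"
  proof (intro allI impI)
    fix i assume i: "i < length ns"
    have "digit (m#ns) c (Suc i) = digit (m#ns) c' (Suc i)" using Cons.prems(4) i by simp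
    then show "digit ns (c mod npts ns) i = digit ns (c' mod npts ns) i"
      using digit_Cons_Suc[OF i] by simp
  qed
  then have "c mod npts ns = c' mod npts ns"
    using Cons.IH[OF p(1)] npts_pos[OF p(1)] by simp
  moreover have "c = c div npts ns * npts ns + c mod npts ns" "c' = c' div npts ns * npts ns + c' mod npts ns"
    by simp_all
  ultimately show ?case using d0 by metis
qed

lemma sum_split_mult:
  fixes f :: "nat \<Rightarrow> 'a::comm_monoid_add"
  shows "(\<Sum>k<m * N. f k) = (\<Sum>x<m. \<Sum>y<N. f (x * N + y))"
proof (induction m)
  case 0 then show ?case by simp
next
  case (Suc m)
  have "(\<Sum>k<Suc m * N. f k) = (\<Sum>k<m * N + N. f k)" by (simp add: add.commute)
  also have "\<dots> = (\<Sum>k<m * N. f k) + (\<Sum>k=m * N..<m * N + N. f k)"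
    using sum.atLeastLessThan_concat[of 0 "m*N" "m*N+N" f] by (simp add: atLeast0LessThan)
  also have "(\<Sum>k=m * N..<m * N + N. f k) = (\<Sum>y<N. f (m * N + y))"
    by (simp add: sum.shift_bounds_nat_ivl[of f 0 "m*N" N, simplified] add.commute lessThan_atLeast0)
  finally show ?case using Suc by simp
qed

lemma char_sum:
  assumes "posl ns"
  shows "(\<Sum>\<kappa><npts ns. e (\<Sum>i<length ns. real_of_int (a i) * real (digit ns \<kappa> i) / real (ns!i)))
         = (if \<forall>i<length ns. int (ns!i) dvd a i then of_nat (npts ns) else 0)"
  using assms
proof (induction ns arbitrary: a)
  case Nil then show ?case by simp
next
  case (Cons m ns)
  have p: "posl ns" "m > 0" using Cons.prems posl_Cons by auto
  let ?N = "npts ns"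
  have Npos: "?N > 0" using npts_pos[OF p(1)] .
  have dig0: "digit (m#ns) (x * ?N + y) 0 = x" if "x < m" "y < ?N" for x y
  proof -
    have "x * ?N + y < (x + 1) * ?N" using that by simp
    also have "(x + 1) * ?N \<le> m * ?N" using that by (intro mult_le_mono1) simp
    finally have "x * ?N + y < m * ?N" .
    then show ?thesis using digit_Cons0 that by simp
  qed
  have digS: "digit (m#ns) (x * ?N + y) (Suc i) = digit ns y i" if "y < ?N" "i < length ns" for x y i
    using digit_Cons_Suc[OF that(2)] that(1) by simp
  have "(\<Sum>\<kappa><npts (m#ns). e (\<Sum>i<length (m#ns). real_of_int (a i) * real (digit (m#ns) \<kappa> i) / real ((m#ns)!i)))
     = (\<Sum>x<m. \<Sum>y<?N. e (\<Sum>i<Suc (length ns). real_of_int (a i) * real (digit (m#ns) (x * ?N + y) i) / real ((m#ns)!i)))"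
    by (simp only: npts_Cons sum_split_mult length_Cons)
  also have "\<dots> = (\<Sum>x<m. \<Sum>y<?N. e (real_of_int (a 0) * real x / real m) *
                    e (\<Sum>i<length ns. real_of_int (a (Suc i)) * real (digit ns y i) / real (ns!i)))"
  proof (intro sum.cong refl)
    fix x y assume xy: "x \<in> {..<m}" "y \<in> {..<?N}"
    have "(\<Sum>i<Suc (length ns). real_of_int (a i) * real (digit (m#ns) (x * ?N + y) i) / real ((m#ns)!i))
        = real_of_int (a 0) * real x / real m +
          (\<Sum>i<length ns. real_of_int (a (Suc i)) * real (digit ns y i) / real (ns!i))"
    proof -
      have x: "x < m" and y: "y < ?N" using xy by auto
      have "(\<Sum>i<length ns. real_of_int (a (Suc i)) * real (digit (m#ns) (x * ?N + y) (Suc i)) / real ((m#ns)!(Suc i)))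
          = (\<Sum>i<length ns. real_of_int (a (Suc i)) * real (digit ns y i) / real (ns!i))"
        by (intro sum.cong refl) (simp add: digS[OF y])
      moreover have "real_of_int (a 0) * real (digit (m#ns) (x * ?N + y) 0) / real ((m#ns)!0)
          = real_of_int (a 0) * real x / real m"
        using dig0[OF x y] by simp
      ultimately show ?thesis by (simp only: sum.lessThan_Suc_shift)
    qed
    then show "e (\<Sum>i<Suc (length ns). real_of_int (a i) * real (digit (m#ns) (x * ?N + y) i) / real ((m#ns)!i))
        = e (real_of_int (a 0) * real x / real m) *
          e (\<Sum>i<length ns. real_of_int (a (Suc i)) * real (digit ns y i) / real (ns!i))"
      by (simp add: e_add)
  qed
  also have "\<dots> = (\<Sum>x<m. e (real_of_int (a 0) * real x / real m)) *
                   (\<Sum>y<?N. e (\<Sum>i<length ns. real_of_int (a (Suc i)) * real (digit ns y i) / real (ns!i)))"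
    by (rule sum_product[symmetric])
  also have "\<dots> = (if int m dvd a 0 then of_nat m else 0) *
                   (if \<forall>i<length ns. int (ns!i) dvd a (Suc i) then of_nat ?N else 0)"
    using char_sum_1d[OF p(2)] Cons.IH[OF p(1), of "\<lambda>i. a (Suc i)"] by simp
  also have "\<dots> = (if \<forall>i<length (m#ns). int ((m#ns)!i) dvd a i then of_nat (npts (m#ns)) else 0)"
  proof -
    have iff: "(\<forall>i<length (m#ns). int ((m#ns)!i) dvd a i) \<longleftrightarrow> int m dvd a 0 \<and> (\<forall>i<length ns. int (ns!i) dvd a (Suc i))"
      by (simp only: length_Cons All_less_Suc2 nth_Cons_0 nth_Cons_Suc)
    show ?thesis unfolding iff npts_Cons
      by (cases "int m dvd a 0"; cases "\<forall>i<length ns. int (ns!i) dvd a (Suc i)") auto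
  qed
  finally show ?case .
qed




lemma mult_mat_entry:
  assumes "A \<in> carrier_mat n m" "B \<in> carrier_mat m p" "i < n" "j < p"
  shows "(A * B) $$ (i,j) = (\<Sum>k<m. A $$ (i,k) * B $$ (k,j))"
  using assms by (simp add: scalar_prod_def atLeast0LessThan)

definition phase :: "nat list \<Rightarrow> nat \<Rightarrow> nat \<Rightarrow> real" where
  "phase ns c k = (\<Sum>i<length ns. real (digit ns c i) * real (digit ns k i) / real (ns!i))"

definition Fentry :: "nat list \<Rightarrow> nat \<Rightarrow> nat \<Rightarrow> complex" where
  "Fentry ns c k = e (- phase ns c k) / complex_of_real (sqrt (real (npts ns)))"

lemma phase_sym: "phase ns c k = phase ns k c"
  unfolding phase_def by (simp add: mult.commute)

lemma F_mat_Nil: "F_mat [] = 1\<^sub>m 1" by (simp add: F_mat_def)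
lemma F_mat_Cons: "F_mat (m#ns) = kron (fourier_mat m) (F_mat ns)" by (simp add: F_mat_def)

lemma kron_carrier:
  assumes "A \<in> carrier_mat a b" "B \<in> carrier_mat c d"
  shows "kron A B \<in> carrier_mat (a*c) (b*d)"
proof -
  have "dim_row A = a" "dim_col A = b" "dim_row B = c" "dim_col B = d"
    using assms by (simp_all add: carrier_matD)
  then show ?thesis unfolding kron_def by (simp only: mat_carrier)
qed

lemma fourier_carrier: "fourier_mat m \<in> carrier_mat m m"
  unfolding fourier_mat_def by (rule mat_carrier)

lemma F_carrier: "F_mat ns \<in> carrier_mat (npts ns) (npts ns)"
proof (induction ns)
  case Nil show ?case by (simp add: F_mat_Nil)
next
  case (Cons m ns)
  show ?case unfolding F_mat_Cons npts_Cons by (rule kron_carrier[OF fourier_carrier Cons.IH])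
qed

lemma fourier_entry:
  assumes "x < m" "y < m"
  shows "fourier_mat m $$ (x,y) = e (- (real x * real y / real m)) / complex_of_real (sqrt (real m))"
  unfolding fourier_mat_def e_def using assms by (simp add: mult_ac)

lemma phase_Cons:
  assumes "posl (m#ns)" "c < m * npts ns" "k < m * npts ns"
  shows "phase (m#ns) c k = real (c div npts ns) * real (k div npts ns) / real m
           + phase ns (c mod npts ns) (k mod npts ns)"
proof -
  have "phase (m#ns) c k = real (digit (m#ns) c 0) * real (digit (m#ns) k 0) / real ((m#ns)!0)
       + (\<Sum>i<length ns. real (digit (m#ns) c (Suc i)) * real (digit (m#ns) k (Suc i)) / real ((m#ns)!(Suc i)))"
    unfolding phase_def by (simp only: length_Cons sum.lessThan_Suc_shift)
  also have "(\<Sum>i<length ns. real (digit (m#ns) c (Suc i)) * real (digit (m#ns) k (Suc i)) / real ((m#ns)!(Suc i)))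
      = phase ns (c mod npts ns) (k mod npts ns)"
    unfolding phase_def by (intro sum.cong refl) (simp add: digit_Cons_Suc)
  finally show ?thesis using digit_Cons0 assms by simp
qed

lemma F_entry:
  assumes "posl ns" "c < npts ns" "k < npts ns"
  shows "F_mat ns $$ (c,k) = Fentry ns c k"
  using assms
proof (induction ns arbitrary: c k)
  case Nil
  then show ?case by (simp add: F_mat_Nil Fentry_def phase_def)
next
  case (Cons m ns)
  let ?N = "npts ns"
  have p: "posl ns" "m > 0" using Cons.prems posl_Cons by auto
  have Npos: "?N > 0" using npts_pos[OF p(1)] .
  have FC: "F_mat ns \<in> carrier_mat ?N ?N" by (rule F_carrier)
  have cm: "c < m * ?N" "k < m * ?N" using Cons.prems by (simp_all add: npts_Cons)
  have cd: "c div ?N < m" "k div ?N < m" using cm by (simp_all add: less_mult_imp_div_less)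
  have cmod: "c mod ?N < ?N" "k mod ?N < ?N" using Npos by simp_all
  have "F_mat (m#ns) $$ (c,k) = fourier_mat m $$ (c div ?N, k div ?N) * F_mat ns $$ (c mod ?N, k mod ?N)"
    using FC cm unfolding F_mat_Cons kron_def fourier_mat_def by simp
  also have "\<dots> = e (- (real (c div ?N) * real (k div ?N) / real m)) / complex_of_real (sqrt (real m))
         * (e (- phase ns (c mod ?N) (k mod ?N)) / complex_of_real (sqrt (real ?N)))"
    using fourier_entry[OF cd] Cons.IH[OF p(1) cmod] unfolding Fentry_def by simp
  also have "\<dots> = e (- phase (m#ns) c k) / complex_of_real (sqrt (real (npts (m#ns))))"
    using phase_Cons[OF Cons.prems(1) cm]
    by (simp add: npts_Cons real_sqrt_mult e_add[symmetric])
  finally show ?case unfolding Fentry_def .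
qed


lemma int_dvd_diff_less:
  assumes "int n dvd int x - int y" "x < n" "y < n"
  shows "x = y"
proof -
  obtain q where q: "int x - int y = int n * q" using assms(1) by (auto elim: dvdE)
  have "q = 0"
  proof (rule ccontr)
    assume "q \<noteq> 0"
    then have "q \<ge> 1 \<or> q \<le> -1" by linarith
    then show False
    proof
      assume "q \<ge> 1"
      then have "int n * q \<ge> int n" by (simp add: mult_le_cancel_left1)
      then show False using q assms(2,3) by linarith
    next
      assume "q \<le> -1"
      then have "int n * q \<le> - int n"
        using mult_left_mono[of q "-1" "int n"] by simp
      then show False using q assms(2,3) by linarith
    qed
  qed
  then show ?thesis using q by simp
qed

lemma orth:
  assumes "posl ns" "c < npts ns" "c' < npts ns"
  shows "(\<Sum>k<npts ns. e (phase ns c' k - phase ns c k)) = (if c = c' then of_nat (npts ns) else 0)"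
proof -
  define a where "a i = int (digit ns c' i) - int (digit ns c i)" for i
  have "phase ns c' k - phase ns c k = (\<Sum>i<length ns. real_of_int (a i) * real (digit ns k i) / real (ns!i))" for k
    unfolding phase_def a_def by (simp add: sum_subtractf[symmetric] diff_divide_distrib left_diff_distrib)
  then have "(\<Sum>k<npts ns. e (phase ns c' k - phase ns c k))
      = (if \<forall>i<length ns. int (ns!i) dvd a i then of_nat (npts ns) else 0)"
    using char_sum[OF assms(1), of a] by simp
  also have "(\<forall>i<length ns. int (ns!i) dvd a i) \<longleftrightarrow> c = c'"
  proof
    assume H: "\<forall>i<length ns. int (ns!i) dvd a i"
    have "\<forall>i<length ns. digit ns c i = digit ns c' i"
    proof (intro allI impI)
      fix i assume i: "i < length ns"
      show "digit ns c i = digit ns c' i"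
        using int_dvd_diff_less[of "ns!i" "digit ns c' i" "digit ns c i"] H i digit_less[OF assms(1) i]
        unfolding a_def by auto
    qed
    then show "c = c'" using digit_inj[OF assms] by blast
  next
    assume "c = c'"
    then show "\<forall>i<length ns. int (ns!i) dvd a i" unfolding a_def by simp
  qed
  finally show ?thesis .
qed

definition FH :: "nat list \<Rightarrow> complex mat" where
  "FH ns = mat (npts ns) (npts ns) (\<lambda>(i,j). cnj (F_mat ns $$ (j,i)))"

lemma FH_carrier: "FH ns \<in> carrier_mat (npts ns) (npts ns)"
  unfolding FH_def by (rule mat_carrier)

lemma sqrt_sq_complex: "complex_of_real (sqrt (real N)) * complex_of_real (sqrt (real N)) = of_nat N"
  by (simp flip: of_real_mult)

lemma F_FH:
  assumes "posl ns"
  shows "F_mat ns * FH ns = 1\<^sub>m (npts ns)"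
proof (rule eq_matI)
  let ?N = "npts ns"
  have Npos: "?N > 0" using npts_pos[OF assms] .
  let ?s = "complex_of_real (sqrt (real ?N))"
  have s0: "?s \<noteq> 0" using Npos by simp
  fix c c' assume c: "c < dim_row (1\<^sub>m ?N)" and c': "c' < dim_col (1\<^sub>m ?N)"
  then have cc: "c < ?N" "c' < ?N" by simp_all
  have "(F_mat ns * FH ns) $$ (c,c') = (\<Sum>k<?N. F_mat ns $$ (c,k) * FH ns $$ (k,c'))"
    by (rule mult_mat_entry[OF F_carrier FH_carrier cc])
  also have "\<dots> = (\<Sum>k<?N. e (phase ns c' k - phase ns c k) / (?s * ?s))"
  proof (intro sum.cong refl)
    fix k assume "k \<in> {..<?N}"
    then have k: "k < ?N" by simp
    have "F_mat ns $$ (c,k) * FH ns $$ (k,c') = Fentry ns c k * cnj (Fentry ns c' k)"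
      unfolding FH_def using k cc F_entry[OF assms] by simp
    also have "\<dots> = e (- phase ns c k) * e (phase ns c' k) / (?s * ?s)"
      unfolding Fentry_def by (simp add: e_cnj)
    also have "\<dots> = e (phase ns c' k - phase ns c k) / (?s * ?s)"
      by (simp add: e_add[symmetric])
    finally show "F_mat ns $$ (c,k) * FH ns $$ (k,c') = e (phase ns c' k - phase ns c k) / (?s * ?s)" .
  qed
  also have "\<dots> = (\<Sum>k<?N. e (phase ns c' k - phase ns c k)) / (?s * ?s)"
    by (simp add: sum_divide_distrib)
  also have "\<dots> = (if c = c' then 1 else 0)"
    unfolding orth[OF assms cc] sqrt_sq_complex using Npos by simp
  also have "\<dots> = 1\<^sub>m ?N $$ (c,c')" using cc by simp
  finally show "(F_mat ns * FH ns) $$ (c,c') = 1\<^sub>m ?N $$ (c,c')" .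
qed (auto simp: FH_def F_carrier[THEN carrier_matD(1)])

lemma FH_F:
  assumes "posl ns"
  shows "FH ns * F_mat ns = 1\<^sub>m (npts ns)"
proof (rule eq_matI)
  let ?N = "npts ns"
  have Npos: "?N > 0" using npts_pos[OF assms] .
  let ?s = "complex_of_real (sqrt (real ?N))"
  fix c c' assume c: "c < dim_row (1\<^sub>m ?N)" and c': "c' < dim_col (1\<^sub>m ?N)"
  then have cc: "c < ?N" "c' < ?N" by simp_all
  have "(FH ns * F_mat ns) $$ (c,c') = (\<Sum>k<?N. FH ns $$ (c,k) * F_mat ns $$ (k,c'))"
    by (rule mult_mat_entry[OF FH_carrier F_carrier cc])
  also have "\<dots> = (\<Sum>k<?N. e (phase ns c k - phase ns c' k) / (?s * ?s))"
  proof (intro sum.cong refl)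
    fix k assume "k \<in> {..<?N}"
    then have k: "k < ?N" by simp
    have "FH ns $$ (c,k) * F_mat ns $$ (k,c') = cnj (Fentry ns k c) * Fentry ns k c'"
      unfolding FH_def using k cc F_entry[OF assms] by simp
    also have "\<dots> = e (phase ns c k) * e (- phase ns c' k) / (?s * ?s)"
      unfolding Fentry_def by (simp add: e_cnj phase_sym)
    also have "\<dots> = e (phase ns c k - phase ns c' k) / (?s * ?s)"
      by (simp add: e_add[symmetric])
    finally show "FH ns $$ (c,k) * F_mat ns $$ (k,c') = e (phase ns c k - phase ns c' k) / (?s * ?s)" .
  qed
  also have "\<dots> = (\<Sum>k<?N. e (phase ns c k - phase ns c' k)) / (?s * ?s)"
    by (simp add: sum_divide_distrib)
  also have "\<dots> = (if c = c' then 1 else 0)"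
    unfolding orth[OF assms cc(2,1)] sqrt_sq_complex using Npos by auto
  also have "\<dots> = 1\<^sub>m ?N $$ (c,c')" using cc by simp
  finally show "(FH ns * F_mat ns) $$ (c,c') = 1\<^sub>m ?N $$ (c,c')" .
qed (auto simp: FH_def F_carrier[THEN carrier_matD(2)])

lemma mat_inv_F:
  assumes "posl ns"
  shows "mat_inv (npts ns) (F_mat ns) = FH ns"
  unfolding mat_inv_def
proof (rule the_equality)
  show "FH ns \<in> carrier_mat (npts ns) (npts ns) \<and> F_mat ns * FH ns = 1\<^sub>m (npts ns) \<and> FH ns * F_mat ns = 1\<^sub>m (npts ns)"
    using FH_carrier F_FH[OF assms] FH_F[OF assms] by blast
next
  fix B assume B: "B \<in> carrier_mat (npts ns) (npts ns) \<and> F_mat ns * B = 1\<^sub>m (npts ns) \<and> B * F_mat ns = 1\<^sub>m (npts ns)"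
  have "B = B * 1\<^sub>m (npts ns)" using B right_mult_one_mat by metis
  also have "\<dots> = B * (F_mat ns * FH ns)" using F_FH[OF assms] by simp
  also have "\<dots> = (B * F_mat ns) * FH ns"
    using B F_carrier FH_carrier by (metis assoc_mult_mat)
  also have "\<dots> = 1\<^sub>m (npts ns) * FH ns" using B by simp
  also have "\<dots> = FH ns" using FH_carrier left_mult_one_mat by metis
  finally show "B = FH ns" .
qed




lemma e_add_int: "e (x + real_of_int k) = e x"
  by (simp add: e_add e_int)

lemma lattice_exp:
  fixes h :: "int^'d"
  shows "exp (2 * pi * \<i> * complex_of_real (\<Sum>j\<in>UNIV. real_of_int (h$j) * (lattice_point zs ns k)$j))
       = e (\<Sum>i<length ns. real_of_int (idot (zs!i) h) * real (digit ns k i) / real (ns!i))"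
proof -
  define X where "X j = (\<Sum>i<length ns. real_of_int ((zs!i)$j) * real (digit ns k i) / real (ns!i))" for j
  have lp: "(lattice_point zs ns k)$j = X j - real_of_int (floor (X j))" for j
    unfolding lattice_point_def X_def frac_def by simp
  have "(\<Sum>j\<in>UNIV. real_of_int (h$j) * (lattice_point zs ns k)$j)
      = (\<Sum>j\<in>UNIV. real_of_int (h$j) * X j) + real_of_int (- (\<Sum>j\<in>UNIV. h$j * floor (X j)))"
    unfolding lp by (simp add: right_diff_distrib sum_subtractf)
  also have "(\<Sum>j\<in>UNIV. real_of_int (h$j) * X j)
      = (\<Sum>i<length ns. real_of_int (idot (zs!i) h) * real (digit ns k i) / real (ns!i))"
    unfolding X_def idot_def
    by (simp add: sum_distrib_left sum_distrib_right sum_divide_distrib mult_ac sum.swap[of _ UNIV])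
  finally have eq: "(\<Sum>j\<in>UNIV. real_of_int (h$j) * (lattice_point zs ns k)$j)
      = (\<Sum>i<length ns. real_of_int (idot (zs!i) h) * real (digit ns k i) / real (ns!i)) + real_of_int (- (\<Sum>j\<in>UNIV. h$j * floor (X j)))" .
  show ?thesis unfolding e_def[symmetric] eq by (rule e_add_int)
qed

lemma fourier_lattice:
  "fourier_fun vh (lattice_point zs ns k)
     = (\<Sum>\<^sub>\<infinity>h. vh h * e (\<Sum>i<length ns. real_of_int (idot (zs!i) h) * real (digit ns k i) / real (ns!i)))"
  unfolding fourier_fun_def lattice_exp ..

lemma infsum_finite_sum:
  fixes f :: "'k \<Rightarrow> 'a \<Rightarrow> complex"
  assumes "finite K" "\<And>k. k \<in> K \<Longrightarrow> f k summable_on A"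
  shows "(\<lambda>x. \<Sum>k\<in>K. f k x) summable_on A \<and> infsum (\<lambda>x. \<Sum>k\<in>K. f k x) A = (\<Sum>k\<in>K. infsum (f k) A)"
  using assms
proof (induction K rule: finite_induct)
  case empty then show ?case by simp
next
  case (insert k K)
  have s1: "f k summable_on A" using insert by simp
  have IH: "(\<lambda>x. \<Sum>k\<in>K. f k x) summable_on A" "infsum (\<lambda>x. \<Sum>k\<in>K. f k x) A = (\<Sum>k\<in>K. infsum (f k) A)"
    using insert by auto
  have "(\<lambda>x. f k x + (\<Sum>k\<in>K. f k x)) summable_on A" using summable_on_add[OF s1 IH(1)] .
  moreover have "infsum (\<lambda>x. f k x + (\<Sum>k\<in>K. f k x)) A = infsum (f k) A + (\<Sum>k\<in>K. infsum (f k) A)"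
    using infsum_add[OF s1 IH(1)] IH(2) by simp
  ultimately show ?case using insert.hyps by simp
qed

lemma summ_mult_e:
  fixes vh :: "int^'d \<Rightarrow> complex"
  assumes vs: "(\<lambda>h. cmod (vh h)) summable_on UNIV"
  shows "(\<lambda>h. vh h * e (g h)) summable_on UNIV"
proof -
  have "(\<lambda>h. norm (vh h * e (g h))) summable_on UNIV"
    using vs by (simp add: norm_mult)
  then show ?thesis by (rule abs_summable_summable)
qed

lemma summ_if:
  fixes vh :: "int^'d \<Rightarrow> complex"
  assumes vs: "(\<lambda>h. cmod (vh h)) summable_on UNIV"
  shows "(\<lambda>h. if P h then vh h else 0) summable_on UNIV"
proof -
  have "(\<lambda>h. norm (if P h then vh h else 0)) summable_on UNIV"
    by (rule summable_on_comparison_test[OF vs]) auto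
  then show ?thesis by (rule abs_summable_summable)
qed

definition Sset :: "(int^'d) list \<Rightarrow> nat list \<Rightarrow> nat \<Rightarrow> nat \<Rightarrow> (int^'d) set" where
  "Sset zs ns c c' = {h. \<forall>i<length ns. [idot (zs!i) h = int (digit ns c i) - int (digit ns c' i)] (mod int (ns!i))}"

lemma W_entry:
  fixes vh :: "int^'d \<Rightarrow> complex"
  assumes pos: "posl ns" and cc: "c < npts ns" "c' < npts ns"
    and vs: "(\<lambda>h. cmod (vh h)) summable_on UNIV"
  shows "W_mat zs ns vh $$ (c,c') = infsum vh (Sset zs ns c c')"
proof -
  let ?N = "npts ns"
  have Npos: "?N > 0" using npts_pos[OF pos] .
  let ?s = "complex_of_real (sqrt (real ?N))"
  have ss: "?s * ?s = of_nat ?N" by (rule sqrt_sq_complex)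
  define v where "v k = fourier_fun vh (lattice_point zs ns k)" for k
  define E where "E h k = e (\<Sum>i<length ns. real_of_int (idot (zs!i) h + int (digit ns c' i) - int (digit ns c i)) * real (digit ns k i) / real (ns!i))" for h k
  have vsum: "vh summable_on UNIV" using vs abs_summable_summable by blast
  have FV: "F_mat ns * V_mat zs ns vh = mat ?N ?N (\<lambda>(i,j). F_mat ns $$ (i,j) * v j)"
    unfolding V_mat_def v_def by (rule mat_diag_mult_right[OF F_carrier])
  have "W_mat zs ns vh $$ (c,c') = (F_mat ns * V_mat zs ns vh * FH ns) $$ (c,c')"
    unfolding W_mat_def mat_inv_F[OF pos] ..
  also have "\<dots> = (\<Sum>k<?N. (F_mat ns * V_mat zs ns vh) $$ (c,k) * FH ns $$ (k,c'))"
    by (rule mult_mat_entry[OF _ FH_carrier cc]) (simp add: FV)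
  also have "\<dots> = (\<Sum>k<?N. v k * e (phase ns c' k - phase ns c k) / (?s * ?s))"
  proof (intro sum.cong refl)
    fix k assume "k \<in> {..<?N}"
    then have k: "k < ?N" by simp
    have "(F_mat ns * V_mat zs ns vh) $$ (c,k) * FH ns $$ (k,c') = Fentry ns c k * v k * cnj (Fentry ns c' k)"
      unfolding FV FH_def using k cc F_entry[OF pos] by simp
    also have "\<dots> = v k * (e (- phase ns c k) * e (phase ns c' k)) / (?s * ?s)"
      unfolding Fentry_def by (simp add: e_cnj)
    also have "\<dots> = v k * e (phase ns c' k - phase ns c k) / (?s * ?s)"
      by (simp add: e_add[symmetric])
    finally show "(F_mat ns * V_mat zs ns vh) $$ (c,k) * FH ns $$ (k,c') = v k * e (phase ns c' k - phase ns c k) / (?s * ?s)" .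
  qed
  also have "\<dots> = (\<Sum>k<?N. infsum (\<lambda>h. vh h * E h k) UNIV) / of_nat ?N"
  proof -
    have "v k * e (phase ns c' k - phase ns c k) = infsum (\<lambda>h. vh h * E h k) UNIV" for k
    proof -
      define G where "G h = (\<Sum>i<length ns. real_of_int (idot (zs!i) h) * real (digit ns k i) / real (ns!i))" for h
      have GE: "e (G h) * e (phase ns c' k - phase ns c k) = E h k" for h
      proof -
        have "G h + (phase ns c' k - phase ns c k)
           = (\<Sum>i<length ns. real_of_int (idot (zs!i) h + int (digit ns c' i) - int (digit ns c i)) * real (digit ns k i) / real (ns!i))"
          unfolding G_def phase_def
          by (simp add: sum.distrib[symmetric] sum_subtractf[symmetric] algebra_simps add_divide_distrib diff_divide_distrib)
        then show ?thesis unfolding E_def by (simp add: e_add[symmetric])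
      qed
      have "v k * e (phase ns c' k - phase ns c k) = (\<Sum>\<^sub>\<infinity>h. vh h * e (G h)) * e (phase ns c' k - phase ns c k)"
        unfolding v_def fourier_lattice G_def ..
      also have "\<dots> = (\<Sum>\<^sub>\<infinity>h. vh h * e (G h) * e (phase ns c' k - phase ns c k))"
        by (rule infsum_cmult_left[symmetric]) (rule summ_mult_e[OF vs])
      also have "\<dots> = infsum (\<lambda>h. vh h * E h k) UNIV"
        by (intro infsum_cong) (simp add: GE[symmetric] mult.assoc)
      finally show ?thesis .
    qed
    then show ?thesis unfolding ss by (simp add: sum_divide_distrib)
  qed
  also have "(\<Sum>k<?N. infsum (\<lambda>h. vh h * E h k) UNIV) = infsum (\<lambda>h. \<Sum>k<?N. vh h * E h k) UNIV"
    using infsum_finite_sum[of "{..<?N}" "\<lambda>k h. vh h * E h k" UNIV] unfolding E_def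
    using summ_mult_e[OF vs] by simp
  also have "\<dots> = infsum (\<lambda>h. vh h * (if h \<in> Sset zs ns c c' then of_nat ?N else 0)) UNIV"
  proof (intro infsum_cong)
    fix h
    define a where "a i = idot (zs!i) h + int (digit ns c' i) - int (digit ns c i)" for i
    have "(\<Sum>k<?N. E h k) = (if \<forall>i<length ns. int (ns!i) dvd a i then of_nat ?N else 0)"
      unfolding E_def a_def[symmetric] by (rule char_sum[OF pos])
    moreover have "(\<forall>i<length ns. int (ns!i) dvd a i) \<longleftrightarrow> h \<in> Sset zs ns c c'"
      unfolding Sset_def a_def by (simp add: cong_iff_dvd_diff algebra_simps)
    ultimately show "(\<Sum>k<?N. vh h * E h k) = vh h * (if h \<in> Sset zs ns c c' then of_nat ?N else 0)"
      by (simp add: sum_distrib_left[symmetric])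
  qed
  finally have "W_mat zs ns vh $$ (c,c') = infsum (\<lambda>h. vh h * (if h \<in> Sset zs ns c c' then of_nat ?N else 0)) UNIV / of_nat ?N" .
  also have "\<dots> = infsum (\<lambda>h. if h \<in> Sset zs ns c c' then vh h else 0) UNIV"
  proof -
    have "infsum (\<lambda>h. vh h * (if h \<in> Sset zs ns c c' then of_nat ?N else 0)) UNIV
        = infsum (\<lambda>h. (if h \<in> Sset zs ns c c' then vh h else 0) * of_nat ?N) UNIV"
      by (intro infsum_cong) simp
    also have "\<dots> = infsum (\<lambda>h. if h \<in> Sset zs ns c c' then vh h else 0) UNIV * of_nat ?N"
      by (rule infsum_cmult_left) (rule summ_if[OF vs])
    finally show ?thesis using Npos by simp
  qed
  also have "\<dots> = infsum vh (Sset zs ns c c')"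
    by (rule infsum_cong_neutral) auto
  finally show ?thesis .
qed




lemma mult_mat_vec_entry:
  assumes "A \<in> carrier_mat N N" "dim_vec x = N" "i < N"
  shows "(A *\<^sub>v x) $ i = (\<Sum>j<N. A $$ (i,j) * x $ j)"
  using assms by (simp add: scalar_prod_def atLeast0LessThan)

lemma schur:
  fixes A :: "complex mat" and x :: "complex vec" and M :: "nat \<Rightarrow> nat \<Rightarrow> real" and u :: "nat \<Rightarrow> real"
  assumes A: "A \<in> carrier_mat N N" and x: "dim_vec x = N"
    and Mnn: "\<And>i j. M i j \<ge> 0" and unn: "\<And>j. u j \<ge> 0"
    and bnd: "\<And>i j. i < N \<Longrightarrow> j < N \<Longrightarrow> cmod (A $$ (i,j) * x $ j) \<le> M i j * u j"
    and row: "\<And>i. i < N \<Longrightarrow> (\<Sum>j<N. M i j) \<le> S"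
    and col: "\<And>j. j < N \<Longrightarrow> (\<Sum>i<N. M i j) \<le> S"
    and S0: "S \<ge> 0"
  shows "vnorm2 (A *\<^sub>v x) \<le> S * sqrt (\<Sum>j<N. (u j)\<^sup>2)"
proof -
  define r where "r i = (\<Sum>j<N. M i j * u j)" for i
  have r1: "cmod ((A *\<^sub>v x) $ i) \<le> r i" if i: "i < N" for i
  proof -
    have "cmod ((A *\<^sub>v x) $ i) = cmod (\<Sum>j<N. A $$ (i,j) * x $ j)"
      using mult_mat_vec_entry[OF A x i] by simp
    also have "\<dots> \<le> (\<Sum>j<N. cmod (A $$ (i,j) * x $ j))" by (rule norm_sum)
    also have "\<dots> \<le> r i" unfolding r_def using bnd i by (intro sum_mono) auto
    finally show ?thesis .
  qed
  have r2: "(r i)\<^sup>2 \<le> S * (\<Sum>j<N. M i j * (u j)\<^sup>2)" if i: "i < N" for i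
  proof -
    have "(r i)\<^sup>2 = (\<Sum>j<N. sqrt (M i j) * (sqrt (M i j) * u j))\<^sup>2"
      unfolding r_def using Mnn by (simp add: mult.assoc[symmetric])
    also have "\<dots> \<le> (\<Sum>j<N. (sqrt (M i j))\<^sup>2) * (\<Sum>j<N. (sqrt (M i j) * u j)\<^sup>2)"
      by (rule Cauchy_Schwarz_ineq_sum)
    also have "\<dots> = (\<Sum>j<N. M i j) * (\<Sum>j<N. M i j * (u j)\<^sup>2)"
      using Mnn by (simp add: power_mult_distrib)
    also have "\<dots> \<le> S * (\<Sum>j<N. M i j * (u j)\<^sup>2)"
      using row[OF i] Mnn unn by (intro mult_right_mono sum_nonneg) auto
    finally show ?thesis .
  qed
  have "(\<Sum>i<dim_vec (A *\<^sub>v x). (cmod ((A *\<^sub>v x) $ i))\<^sup>2) = (\<Sum>i<N. (cmod ((A *\<^sub>v x) $ i))\<^sup>2)"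
    using A by simp
  also have "\<dots> \<le> (\<Sum>i<N. (r i)\<^sup>2)"
    using r1 by (intro sum_mono power_mono) auto
  also have "\<dots> \<le> (\<Sum>i<N. S * (\<Sum>j<N. M i j * (u j)\<^sup>2))"
    using r2 by (intro sum_mono) auto
  also have "\<dots> = S * (\<Sum>j<N. (u j)\<^sup>2 * (\<Sum>i<N. M i j))"
  proof -
    have "(\<Sum>i<N. S * (\<Sum>j<N. M i j * (u j)\<^sup>2)) = S * (\<Sum>i<N. \<Sum>j<N. M i j * (u j)\<^sup>2)"
      by (rule sum_distrib_left[symmetric])
    also have "(\<Sum>i<N. \<Sum>j<N. M i j * (u j)\<^sup>2) = (\<Sum>j<N. \<Sum>i<N. M i j * (u j)\<^sup>2)"
      by (rule sum.swap)
    also have "\<dots> = (\<Sum>j<N. (u j)\<^sup>2 * (\<Sum>i<N. M i j))"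
      by (intro sum.cong refl) (simp add: sum_distrib_left mult.commute)
    finally show ?thesis .
  qed
  also have "\<dots> \<le> S * (\<Sum>j<N. (u j)\<^sup>2 * S)"
    using col S0 by (intro mult_left_mono sum_mono) (auto intro: mult_left_mono)
  also have "\<dots> = S\<^sup>2 * (\<Sum>j<N. (u j)\<^sup>2)"
    by (simp add: sum_distrib_right[symmetric] power2_eq_square mult_ac sum_distrib_left)
  finally have "vnorm2 (A *\<^sub>v x) \<le> sqrt (S\<^sup>2 * (\<Sum>j<N. (u j)\<^sup>2))"
    unfolding vnorm2_def by (rule real_sqrt_le_mono)
  also have "\<dots> = S * sqrt (\<Sum>j<N. (u j)\<^sup>2)"
    using S0 by (simp add: real_sqrt_mult)
  finally show ?thesis .
qed


lemma idot_add: "idot z (a + b) = idot z a + idot z b"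
  unfolding idot_def by (simp add: distrib_left sum.distrib)

lemma isqnorm_nonneg: "isqnorm h \<ge> 0"
  unfolding isqnorm_def by (simp add: sum_nonneg)

lemma isqnorm_add_le: "isqnorm (u + h) \<le> 2 * isqnorm u + 2 * isqnorm h"
proof -
  have "(u$j + h$j)^2 \<le> 2 * (u$j)^2 + 2 * (h$j)^2" for j
  proof -
    have "0 \<le> (u$j - h$j)^2" by simp
    then show ?thesis by (simp add: power2_eq_square algebra_simps)
  qed
  then have "(\<Sum>j\<in>UNIV. (u$j + h$j)^2) \<le> (\<Sum>j\<in>UNIV. 2 * (u$j)^2 + 2 * (h$j)^2)"
    by (intro sum_mono) auto
  then show ?thesis unfolding isqnorm_def by (simp add: sum.distrib sum_distrib_left)
qed

lemma min_bound:
  assumes mh: "min_anti_aliasing zs ns hs" and cc: "c < npts ns" "c' < npts ns"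
    and h: "h \<in> Sset zs ns c c'"
  shows "isqnorm (hs c) \<le> 2 * isqnorm (hs c') + 2 * isqnorm h"
proof -
  have rep': "represents zs ns c' (hs c')" using mh cc unfolding min_anti_aliasing_def by blast
  have "represents zs ns c (hs c' + h)"
    unfolding represents_def
  proof (intro allI impI)
    fix i assume i: "i < length ns"
    have 1: "[idot (zs!i) (hs c') = int (digit ns c' i)] (mod int (ns!i))"
      using rep' i unfolding represents_def by blast
    have 2: "[idot (zs!i) h = int (digit ns c i) - int (digit ns c' i)] (mod int (ns!i))"
      using h i unfolding Sset_def by blast
    have "[idot (zs!i) (hs c') + idot (zs!i) h = int (digit ns c' i) + (int (digit ns c i) - int (digit ns c' i))] (mod int (ns!i))"
      by (rule cong_add[OF 1 2])
    then show "[idot (zs!i) (hs c' + h) = int (digit ns c i)] (mod int (ns!i))"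
      by (simp add: idot_add)
  qed
  then have "isqnorm (hs c) \<le> isqnorm (hs c' + h)"
    using mh cc unfolding min_anti_aliasing_def by blast
  then show ?thesis using isqnorm_add_le[of "hs c'" h] by linarith
qed

lemma diff_bound:
  fixes a b H :: real
  assumes "a \<le> 2 * b + 2 * H" "a \<ge> 0" "b \<ge> 0" "H \<ge> 0"
  shows "\<bar>a - b\<bar> \<le> (1 + b) * (1 + 2 * H)"
proof (cases "a \<ge> b")
  case True
  have "(1 + b) * (1 + 2 * H) = 1 + b + 2 * H + 2 * b * H" by (simp add: algebra_simps)
  moreover have "2 * b * H \<ge> 0" using assms by simp
  ultimately show ?thesis using True assms by linarith
next
  case False
  have "(1 + b) * (1 + 2 * H) \<ge> (1 + b) * 1" using assms by (intro mult_left_mono) auto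
  then have "(1 + b) * (1 + 2 * H) \<ge> 1 + b" by simp
  moreover have "\<bar>a - b\<bar> = b - a" using False by simp
  ultimately show ?thesis using assms by linarith
qed

lemma Sset_disj_right:
  assumes pos: "posl ns" and cc: "c1 < npts ns" "c2 < npts ns" "c1 \<noteq> c2"
  shows "Sset zs ns c c1 \<inter> Sset zs ns c c2 = {}"
proof (rule ccontr)
  assume "Sset zs ns c c1 \<inter> Sset zs ns c c2 \<noteq> {}"
  then obtain h where h1: "h \<in> Sset zs ns c c1" and h2: "h \<in> Sset zs ns c c2" by blast
  have "\<forall>i<length ns. digit ns c1 i = digit ns c2 i"
  proof (intro allI impI)
    fix i assume i: "i < length ns"
    have 1: "[idot (zs!i) h = int (digit ns c i) - int (digit ns c1 i)] (mod int (ns!i))"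
      using h1 i unfolding Sset_def by blast
    have 2: "[idot (zs!i) h = int (digit ns c i) - int (digit ns c2 i)] (mod int (ns!i))"
      using h2 i unfolding Sset_def by blast
    have "[int (digit ns c i) - int (digit ns c1 i) = int (digit ns c i) - int (digit ns c2 i)] (mod int (ns!i))"
      using cong_trans[OF cong_sym[OF 1] 2] .
    then have "int (ns!i) dvd int (digit ns c2 i) - int (digit ns c1 i)"
      by (simp add: cong_iff_dvd_diff)
    then show "digit ns c1 i = digit ns c2 i"
      using int_dvd_diff_less digit_less[OF pos i] by metis
  qed
  then show False using digit_inj[OF pos cc(1,2)] cc(3) by blast
qed

lemma Sset_disj_left:
  assumes pos: "posl ns" and cc: "c1 < npts ns" "c2 < npts ns" "c1 \<noteq> c2"
  shows "Sset zs ns c1 c \<inter> Sset zs ns c2 c = {}"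
proof (rule ccontr)
  assume "Sset zs ns c1 c \<inter> Sset zs ns c2 c \<noteq> {}"
  then obtain h where h1: "h \<in> Sset zs ns c1 c" and h2: "h \<in> Sset zs ns c2 c" by blast
  have "\<forall>i<length ns. digit ns c1 i = digit ns c2 i"
  proof (intro allI impI)
    fix i assume i: "i < length ns"
    have 1: "[idot (zs!i) h = int (digit ns c1 i) - int (digit ns c i)] (mod int (ns!i))"
      using h1 i unfolding Sset_def by blast
    have 2: "[idot (zs!i) h = int (digit ns c2 i) - int (digit ns c i)] (mod int (ns!i))"
      using h2 i unfolding Sset_def by blast
    have "[int (digit ns c1 i) - int (digit ns c i) = int (digit ns c2 i) - int (digit ns c i)] (mod int (ns!i))"
      using cong_trans[OF cong_sym[OF 1] 2] .
    then have "int (ns!i) dvd int (digit ns c1 i) - int (digit ns c2 i)"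
      by (simp add: cong_iff_dvd_diff)
    then show "digit ns c1 i = digit ns c2 i"
      using int_dvd_diff_less digit_less[OF pos i] by metis
  qed
  then show False using digit_inj[OF pos cc(1,2)] cc(3) by blast
qed

lemma sum_infsum_disj_le:
  fixes w :: "'a \<Rightarrow> real" and N :: nat
  assumes wnn: "\<And>h. w h \<ge> 0" and ws: "w summable_on UNIV"
    and disj: "\<And>a a'. a < N \<Longrightarrow> a' < N \<Longrightarrow> a \<noteq> a' \<Longrightarrow> B a \<inter> B a' = {}"
  shows "(\<Sum>a<N. infsum w (B a)) \<le> infsum w UNIV"
proof -
  have sB: "w summable_on B a" for a by (rule summable_on_subset[OF ws]) auto
  have "(\<Sum>a<N. infsum w (B a)) = infsum w (\<Union>a\<in>{..<N}. B a)"
    by (rule sum_infsum) (use sB disj in auto)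
  also have "\<dots> \<le> infsum w UNIV"
  proof (rule infsum_mono_neutral)
    show "w summable_on (\<Union>a\<in>{..<N}. B a)" by (rule summable_on_subset[OF ws]) auto
  qed (use ws wnn in auto)
  finally show ?thesis .
qed




lemma mat_diag_smult: "(r::complex) \<cdot>\<^sub>m mat_diag N f = mat_diag N (\<lambda>i. r * f i)"
  by (rule eq_matI) (auto simp: mat_diag_def)

lemma commut_diag:
  assumes "A \<in> carrier_mat N N"
  shows "commut (mat_diag N f) A = mat N N (\<lambda>(i,j). (f i - f j) * A $$ (i,j))"
  unfolding commut_def mat_diag_mult_left[OF assms] mat_diag_mult_right[OF assms]
  by (rule eq_matI) (auto simp: algebra_simps)

lemma mat_diag_plus_one: "mat_diag N f + 1\<^sub>m N = mat_diag N (\<lambda>i. f i + (1::complex))"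
  by (rule eq_matI) (auto simp: mat_diag_def)

lemma mat_diag_mult_vec:
  assumes "dim_vec x = N" "i < N"
  shows "(mat_diag N f *\<^sub>v x) $ i = f i * x $ i"
proof -
  have "(mat_diag N f *\<^sub>v x) $ i = (\<Sum>j<N. mat_diag N f $$ (i,j) * x $ j)"
    by (rule mult_mat_vec_entry[OF mat_diag_dim assms])
  also have "\<dots> = (\<Sum>j<N. if j = i then f i * x $ i else 0)"
    using assms(2) by (intro sum.cong refl) (auto simp: mat_diag_def)
  also have "\<dots> = f i * x $ i" using assms(2) by simp
  finally show ?thesis .
qed

lemma W_carrier: "posl ns \<Longrightarrow> W_mat zs ns vh \<in> carrier_mat (npts ns) (npts ns)"
  unfolding W_mat_def mat_inv_F V_mat_def
  by (meson F_carrier FH_carrier mat_diag_dim mult_carrier_mat)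


lemma core:
  fixes vh :: "int^'d \<Rightarrow> complex" and hs :: "nat \<Rightarrow> int^'d" and x :: "complex vec" and p :: nat
  assumes g: "\<gamma> > 0" and kor: "korobov \<alpha> vh" and al: "2*\<alpha> - 4*real p > 1"
    and pos: "posl ns" and mh: "min_anti_aliasing zs ns hs" and x: "dim_vec x = npts ns"
    and t_def: "\<And>c. t c = 2*pi^2*\<gamma>*real_of_int (isqnorm (hs c))"
  shows "vnorm2 (mat (npts ns) (npts ns) (\<lambda>(i,j). (complex_of_real (t i) - complex_of_real (t j))^p * (complex_of_real (1/\<gamma>) * W_mat zs ns vh $$ (i,j))) *\<^sub>v x)
         \<le> ((2*pi^2*\<gamma>)^p/\<gamma> * infsum (\<lambda>h. cmod (vh h) * (1 + 2*real_of_int (isqnorm h))^p) UNIV * (max 1 (1/(2*pi^2*\<gamma>)))^p)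
           * vnorm2 (mat_diag (npts ns) (\<lambda>c. (complex_of_real (t c) + 1)^p) *\<^sub>v x)"
proof -
  let ?N = "npts ns"
  define w where "w h = cmod (vh h) * (1 + 2*real_of_int (isqnorm h))^p" for h :: "int^'d"
  define K where "K = max 1 (1/(2*pi^2*\<gamma>))"
  define C0 where "C0 = (2*pi^2*\<gamma>)^p/\<gamma>"
  define A where "A = mat ?N ?N (\<lambda>(i,j). (complex_of_real (t i) - complex_of_real (t j))^p * (complex_of_real (1/\<gamma>) * W_mat zs ns vh $$ (i,j)))"
  define z where "z = mat_diag ?N (\<lambda>c. (complex_of_real (t c) + 1)^p) *\<^sub>v x"
  define M where "M c c' = C0 * infsum w (Sset zs ns c c')" for c c'
  define u where "u c' = K^p * cmod (z $ c')" for c'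
  have wnn: "w h \<ge> 0" for h unfolding w_def using isqnorm_nonneg[of h] by simp
  have ws: "w summable_on UNIV" unfolding w_def by (rule korobov_weighted_summable[OF kor al])
  have vs: "(\<lambda>h. cmod (vh h)) summable_on UNIV"
    using korobov_weighted_summable[OF kor, of 0] al by simp
  have C0: "C0 \<ge> 0" unfolding C0_def using g by simp
  have K1: "K \<ge> 1" unfolding K_def by simp
  have tnn: "t c \<ge> 0" for c unfolding t_def using g isqnorm_nonneg[of "hs c"] by simp
  have zdim: "dim_vec z = ?N" unfolding z_def by (simp add: mat_diag_def)
  have zent: "z $ c = (complex_of_real (t c) + 1)^p * x $ c" if "c < ?N" for c
    unfolding z_def by (rule mat_diag_mult_vec[OF x that])
  have Mnn: "M c c' \<ge> 0" for c c' unfolding M_def using C0 wnn by (simp add: infsum_nonneg)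
  have unn: "u c \<ge> 0" for c unfolding u_def using K1 by simp
  have Acar: "A \<in> carrier_mat ?N ?N" unfolding A_def by simp
  have bnd: "cmod (A $$ (c,c') * x $ c') \<le> M c c' * u c'" if cc: "c < ?N" "c' < ?N" for c c'
  proof -
    define a where "a = real_of_int (isqnorm (hs c))"
    define b where "b = real_of_int (isqnorm (hs c'))"
    have a0: "a \<ge> 0" and b0: "b \<ge> 0" unfolding a_def b_def using isqnorm_nonneg by auto
    let ?S = "Sset zs ns c c'"
    have Wle: "cmod (W_mat zs ns vh $$ (c,c')) \<le> infsum (\<lambda>h. cmod (vh h)) ?S"
      unfolding W_entry[OF pos cc vs]
      by (rule norm_infsum_bound) (rule summable_on_subset[OF vs], simp)
    have hb: "\<bar>a - b\<bar>^p * cmod (vh h) \<le> (1 + b)^p * w h" if h: "h \<in> ?S" for h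
    proof -
      have "a \<le> 2 * b + 2 * real_of_int (isqnorm h)"
        using min_bound[OF mh cc h] unfolding a_def b_def by linarith
      then have "\<bar>a - b\<bar> \<le> (1 + b) * (1 + 2 * real_of_int (isqnorm h))"
        by (rule diff_bound) (use a0 b0 isqnorm_nonneg[of h] in auto)
      then have "\<bar>a - b\<bar>^p \<le> ((1 + b) * (1 + 2 * real_of_int (isqnorm h)))^p"
        by (intro power_mono) auto
      then have "\<bar>a - b\<bar>^p * cmod (vh h) \<le> ((1 + b)^p * (1 + 2 * real_of_int (isqnorm h))^p) * cmod (vh h)"
        unfolding power_mult_distrib by (rule mult_right_mono) simp
      then show ?thesis unfolding w_def by (simp add: mult_ac)
    qed
    have "\<bar>a - b\<bar>^p * infsum (\<lambda>h. cmod (vh h)) ?S = infsum (\<lambda>h. \<bar>a - b\<bar>^p * cmod (vh h)) ?S"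
      by (rule infsum_cmult_right[symmetric]) (rule summable_on_subset[OF vs], simp)
    also have "\<dots> \<le> infsum (\<lambda>h. (1 + b)^p * w h) ?S"
      by (rule infsum_mono) (use hb summable_on_subset[OF vs] summable_on_subset[OF ws] in
        \<open>auto intro: summable_on_cmult_right\<close>)
    also have "\<dots> = (1 + b)^p * infsum w ?S"
      by (rule infsum_cmult_right) (rule summable_on_subset[OF ws], simp)
    finally have key: "\<bar>a - b\<bar>^p * cmod (W_mat zs ns vh $$ (c,c')) \<le> (1 + b)^p * infsum w ?S"
      using Wle by (meson order_trans abs_ge_zero zero_le_power mult_left_mono)
    have bK: "(1 + b)^p \<le> K^p * (t c' + 1)^p"
    proof -
      have "1 + b \<le> K * (t c' + 1)"
      proof -
        have "b = (1/(2*pi^2*\<gamma>)) * t c'" unfolding t_def b_def using g by simp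
        also have "\<dots> \<le> K * t c'" unfolding K_def using tnn by (intro mult_right_mono) auto
        finally show ?thesis using K1 by (simp add: distrib_left)
      qed
      then have "(1 + b)^p \<le> (K * (t c' + 1))^p" by (intro power_mono) (use b0 in auto)
      then show ?thesis by (simp add: power_mult_distrib)
    qed
    have Aent: "A $$ (c,c') = (complex_of_real (t c) - complex_of_real (t c'))^p * (complex_of_real (1/\<gamma>) * W_mat zs ns vh $$ (c,c'))"
      unfolding A_def using cc by simp
    have tdiff: "cmod (complex_of_real (t c) - complex_of_real (t c')) = 2*pi^2*\<gamma> * \<bar>a - b\<bar>"
    proof -
      have eq: "complex_of_real (t c) - complex_of_real (t c') = complex_of_real (2*pi^2*\<gamma> * (a - b))"
        unfolding t_def a_def b_def by (simp add: algebra_simps)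
      show ?thesis unfolding eq norm_of_real using g by (simp add: abs_mult)
    qed
    have "cmod (A $$ (c,c') * x $ c') = (cmod (complex_of_real (t c) - complex_of_real (t c')))^p * (cmod (complex_of_real (1/\<gamma>)) * cmod (W_mat zs ns vh $$ (c,c'))) * cmod (x $ c')"
      unfolding Aent by (simp only: norm_mult norm_power)
    also have "\<dots> = (2*pi^2*\<gamma> * \<bar>a - b\<bar>)^p * ((1/\<gamma>) * cmod (W_mat zs ns vh $$ (c,c'))) * cmod (x $ c')"
      unfolding tdiff norm_of_real using g by simp
    also have "\<dots> = (2*pi^2*\<gamma>)^p * \<bar>a - b\<bar>^p / \<gamma> * cmod (W_mat zs ns vh $$ (c,c')) * cmod (x $ c')"
      by (simp only: power_mult_distrib) simp
    also have "\<dots> = C0 * (\<bar>a - b\<bar>^p * cmod (W_mat zs ns vh $$ (c,c'))) * cmod (x $ c')"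
      unfolding C0_def by simp
    also have "\<dots> \<le> C0 * ((1 + b)^p * infsum w ?S) * cmod (x $ c')"
      using key C0 by (intro mult_right_mono mult_left_mono) auto
    also have "\<dots> \<le> C0 * ((K^p * (t c' + 1)^p) * infsum w ?S) * cmod (x $ c')"
      using bK C0 wnn by (intro mult_right_mono mult_left_mono) (auto simp: infsum_nonneg)
    also have "\<dots> = M c c' * u c'"
    proof -
      have "cmod (z $ c') = (t c' + 1)^p * cmod (x $ c')"
        using zent[OF cc(2)] tnn[of c'] by (simp add: norm_mult norm_power)
      then show ?thesis unfolding M_def u_def by (simp add: mult_ac)
    qed
    finally show ?thesis .
  qed
  have row: "(\<Sum>j<?N. M i j) \<le> C0 * infsum w UNIV" if "i < ?N" for i
  proof -
    have "(\<Sum>j<?N. M i j) = C0 * (\<Sum>j<?N. infsum w (Sset zs ns i j))"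
      unfolding M_def by (simp add: sum_distrib_left)
    also have "\<dots> \<le> C0 * infsum w UNIV"
    proof -
      have "(\<Sum>j<?N. infsum w (Sset zs ns i j)) \<le> infsum w UNIV"
        by (rule sum_infsum_disj_le[OF wnn ws]) (rule Sset_disj_right[OF pos])
      then show ?thesis using C0 by (rule mult_left_mono)
    qed
    finally show ?thesis .
  qed
  have col: "(\<Sum>i<?N. M i j) \<le> C0 * infsum w UNIV" if "j < ?N" for j
  proof -
    have "(\<Sum>i<?N. M i j) = C0 * (\<Sum>i<?N. infsum w (Sset zs ns i j))"
      unfolding M_def by (simp add: sum_distrib_left)
    also have "\<dots> \<le> C0 * infsum w UNIV"
    proof -
      have "(\<Sum>i<?N. infsum w (Sset zs ns i j)) \<le> infsum w UNIV"
        by (rule sum_infsum_disj_le[OF wnn ws]) (rule Sset_disj_left[OF pos])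
      then show ?thesis using C0 by (rule mult_left_mono)
    qed
    finally show ?thesis .
  qed
  have S0: "C0 * infsum w UNIV \<ge> 0" using C0 wnn by (simp add: infsum_nonneg)
  have "vnorm2 (A *\<^sub>v x) \<le> (C0 * infsum w UNIV) * sqrt (\<Sum>j<?N. (u j)\<^sup>2)"
    by (rule schur[OF Acar x Mnn unn bnd row col S0])
  also have "sqrt (\<Sum>j<?N. (u j)\<^sup>2) = K^p * vnorm2 z"
  proof -
    have "(\<Sum>j<?N. (u j)\<^sup>2) = (K^p)\<^sup>2 * (\<Sum>j<?N. (cmod (z $ j))\<^sup>2)"
      unfolding u_def by (simp add: power_mult_distrib sum_distrib_left)
    then show ?thesis unfolding vnorm2_def zdim using K1 by (simp add: real_sqrt_mult)
  qed
  finally show ?thesis unfolding A_def z_def w_def C0_def K_def by (simp add: mult_ac)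
qed


lemma setup_mats:
  fixes vh :: "int^'d \<Rightarrow> complex" and hs :: "nat \<Rightarrow> int^'d" and zs :: "(int^'d) list"
  assumes pos: "posl ns" and g: "\<gamma> > 0"
    and t_def: "\<And>c. t c = 2*pi^2*\<gamma>*real_of_int (isqnorm (hs c))"
  defines "D \<equiv> complex_of_real (\<gamma>/2) \<cdot>\<^sub>m D_mat ns hs"
    and "W \<equiv> complex_of_real (1/\<gamma>) \<cdot>\<^sub>m W_mat zs ns vh"
  shows "commut D W = mat (npts ns) (npts ns) (\<lambda>(i,j). (complex_of_real (t i) - complex_of_real (t j))^1 * (complex_of_real (1/\<gamma>) * W_mat zs ns vh $$ (i,j)))"
    and "commut D (commut D W) = mat (npts ns) (npts ns) (\<lambda>(i,j). (complex_of_real (t i) - complex_of_real (t j))^2 * (complex_of_real (1/\<gamma>) * W_mat zs ns vh $$ (i,j)))"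
    and "D + 1\<^sub>m (npts ns) = mat_diag (npts ns) (\<lambda>c. (complex_of_real (t c) + 1)^1)"
    and "(D + 1\<^sub>m (npts ns)) * (D + 1\<^sub>m (npts ns)) = mat_diag (npts ns) (\<lambda>c. (complex_of_real (t c) + 1)^2)"
proof -
  let ?N = "npts ns"
  have Dd: "D = mat_diag ?N (\<lambda>c. complex_of_real (t c))"
  proof -
    have "(\<lambda>c. complex_of_real (\<gamma>/2) * complex_of_real (4 * pi\<^sup>2 * real_of_int (isqnorm (hs c)))) = (\<lambda>c. complex_of_real (t c))"
    proof
      fix c
      have r: "\<gamma>/2 * (4 * pi\<^sup>2 * real_of_int (isqnorm (hs c))) = t c" unfolding t_def by simp
      show "complex_of_real (\<gamma>/2) * complex_of_real (4 * pi\<^sup>2 * real_of_int (isqnorm (hs c))) = complex_of_real (t c)"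
        by (simp only: of_real_mult[symmetric] r)
    qed
    then show ?thesis unfolding D_def D_mat_def mat_diag_smult by simp
  qed
  have Wc: "W \<in> carrier_mat ?N ?N" unfolding W_def by (rule smult_carrier_mat[OF W_carrier[OF pos]])
  have Went: "W $$ (i,j) = complex_of_real (1/\<gamma>) * W_mat zs ns vh $$ (i,j)" if "i < ?N" "j < ?N" for i j
    unfolding W_def using that W_carrier[OF pos, of zs vh] by simp
  have C1: "commut D W = mat ?N ?N (\<lambda>(i,j). (complex_of_real (t i) - complex_of_real (t j)) * W $$ (i,j))"
    unfolding Dd by (rule commut_diag[OF Wc])
  show "commut D W = mat ?N ?N (\<lambda>(i,j). (complex_of_real (t i) - complex_of_real (t j))^1 * (complex_of_real (1/\<gamma>) * W_mat zs ns vh $$ (i,j)))"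
    unfolding C1 by (rule eq_matI) (auto simp: Went)
  have CWc: "commut D W \<in> carrier_mat ?N ?N" unfolding C1 by simp
  have C2: "commut D (commut D W) = mat ?N ?N (\<lambda>(i,j). (complex_of_real (t i) - complex_of_real (t j)) * commut D W $$ (i,j))"
    unfolding Dd by (rule commut_diag[OF CWc[unfolded Dd]])
  show "commut D (commut D W) = mat ?N ?N (\<lambda>(i,j). (complex_of_real (t i) - complex_of_real (t j))^2 * (complex_of_real (1/\<gamma>) * W_mat zs ns vh $$ (i,j)))"
    unfolding C2 by (rule eq_matI) (auto simp: C1 Went power2_eq_square)
  have DI: "D + 1\<^sub>m ?N = mat_diag ?N (\<lambda>c. complex_of_real (t c) + 1)"
    unfolding Dd by (rule mat_diag_plus_one)
  show "D + 1\<^sub>m ?N = mat_diag ?N (\<lambda>c. (complex_of_real (t c) + 1)^1)" unfolding DI by simp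
  show "(D + 1\<^sub>m ?N) * (D + 1\<^sub>m ?N) = mat_diag ?N (\<lambda>c. (complex_of_real (t c) + 1)^2)"
    unfolding DI mat_diag_diag by (simp add: power2_eq_square)
qed

theorem mainTheorem5:
  fixes vh gh :: "int^'d \<Rightarrow> complex" and \<alpha> \<beta> \<gamma> :: real
  assumes "\<gamma> > 0" and "korobov \<alpha> vh" and "korobov \<beta> gh" and "\<beta> \<ge> 2"
  shows
   "(\<alpha> > 5/2 \<longrightarrow> (\<exists>c1::real. \<forall>(zs :: (int^'d) list) ns hs (y :: real vec).
        1 \<le> length ns \<and> canonical_lattice zs ns \<and> points_distinct zs ns \<and>
        min_anti_aliasing zs ns hs \<and> dim_vec y = npts ns \<longrightarrow>
        (let D = complex_of_real (\<gamma>/2) \<cdot>\<^sub>m D_mat ns hs;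
             W = complex_of_real (1/\<gamma>) \<cdot>\<^sub>m W_mat zs ns vh;
             I = 1\<^sub>m (npts ns);
             yc = map_vec complex_of_real y
         in vnorm2 (commut D W *\<^sub>v yc) \<le> c1 * vnorm2 ((D + I) *\<^sub>v yc)))) \<and>
    (\<alpha> > 9/2 \<longrightarrow> (\<exists>c2::real. \<forall>(zs :: (int^'d) list) ns hs (y :: real vec).
        1 \<le> length ns \<and> canonical_lattice zs ns \<and> points_distinct zs ns \<and>
        min_anti_aliasing zs ns hs \<and> dim_vec y = npts ns \<longrightarrow>
        (let D = complex_of_real (\<gamma>/2) \<cdot>\<^sub>m D_mat ns hs;
             W = complex_of_real (1/\<gamma>) \<cdot>\<^sub>m W_mat zs ns vh;
             I = 1\<^sub>m (npts ns);
             yc = map_vec complex_of_real y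
         in vnorm2 (commut D (commut D W) *\<^sub>v yc) \<le> c2 * vnorm2 (((D + I) * (D + I)) *\<^sub>v yc))))"
proof -
  define Cst where "Cst p = (2*pi^2*\<gamma>)^p/\<gamma> * infsum (\<lambda>h. cmod (vh h) * (1 + 2*real_of_int (isqnorm h))^p) UNIV * (max 1 (1/(2*pi^2*\<gamma>)))^p" for p :: nat
  have gen: "vnorm2 (mat (npts ns) (npts ns) (\<lambda>(i,j). (complex_of_real (t i) - complex_of_real (t j))^p * (complex_of_real (1/\<gamma>) * W_mat zs ns vh $$ (i,j))) *\<^sub>v map_vec complex_of_real y)
         \<le> Cst p * vnorm2 (mat_diag (npts ns) (\<lambda>c. (complex_of_real (t c) + 1)^p) *\<^sub>v map_vec complex_of_real y)"
    if al: "2*\<alpha> - 4*real p > 1" and pos: "posl ns" and mh: "min_anti_aliasing zs ns (hs :: nat \<Rightarrow> int^'d)"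
      and y: "dim_vec y = npts ns" and t_def: "\<And>c. t c = 2*pi^2*\<gamma>*real_of_int (isqnorm (hs c))"
    for p zs ns hs y t
    unfolding Cst_def by (rule core[OF assms(1,2) al pos mh _ t_def]) (simp add: y)
  have posl: "posl ns" if "canonical_lattice zs ns" for zs :: "(int^'d) list" and ns
    using that unfolding canonical_lattice_def posl_def by (elim conjE) assumption
  show ?thesis
  proof (intro conjI impI)
    assume a: "\<alpha> > 5/2"
    show "\<exists>c1::real. \<forall>(zs :: (int^'d) list) ns hs (y :: real vec).
        1 \<le> length ns \<and> canonical_lattice zs ns \<and> points_distinct zs ns \<and>
        min_anti_aliasing zs ns hs \<and> dim_vec y = npts ns \<longrightarrow>
        (let D = complex_of_real (\<gamma>/2) \<cdot>\<^sub>m D_mat ns hs;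
             W = complex_of_real (1/\<gamma>) \<cdot>\<^sub>m W_mat zs ns vh;
             I = 1\<^sub>m (npts ns);
             yc = map_vec complex_of_real y
         in vnorm2 (commut D W *\<^sub>v yc) \<le> c1 * vnorm2 ((D + I) *\<^sub>v yc))"
    proof (intro exI[of _ "Cst 1"] allI impI)
      fix zs :: "(int^'d) list" and ns hs and y :: "real vec"
      assume H: "1 \<le> length ns \<and> canonical_lattice zs ns \<and> points_distinct zs ns \<and> min_anti_aliasing zs ns hs \<and> dim_vec y = npts ns"
      define t where "t c = 2*pi^2*\<gamma>*real_of_int (isqnorm (hs c))" for c
      have "canonical_lattice zs ns" using H by (elim conjE) assumption
      then have pos: "posl ns" by (rule posl)
      note S = setup_mats[OF pos assms(1) t_def]
      show "let D = complex_of_real (\<gamma>/2) \<cdot>\<^sub>m D_mat ns hs;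
             W = complex_of_real (1/\<gamma>) \<cdot>\<^sub>m W_mat zs ns vh;
             I = 1\<^sub>m (npts ns);
             yc = map_vec complex_of_real y
         in vnorm2 (commut D W *\<^sub>v yc) \<le> Cst 1 * vnorm2 ((D + I) *\<^sub>v yc)"
        unfolding Let_def S(1) S(3)
      proof (rule gen[where p=1 and t=t and ns=ns and zs=zs and hs=hs and y=y])
        show "2*\<alpha> - 4*real (1::nat) > 1" using a by simp
        show "posl ns" by (rule pos)
        show "min_anti_aliasing zs ns hs" using H by (elim conjE) assumption
        show "dim_vec y = npts ns" using H by (elim conjE) assumption
        show "t c = 2*pi^2*\<gamma>*real_of_int (isqnorm (hs c))" for c by (rule t_def)
      qed
    qed
  next
    assume a: "\<alpha> > 9/2"
    show "\<exists>c2::real. \<forall>(zs :: (int^'d) list) ns hs (y :: real vec).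
        1 \<le> length ns \<and> canonical_lattice zs ns \<and> points_distinct zs ns \<and>
        min_anti_aliasing zs ns hs \<and> dim_vec y = npts ns \<longrightarrow>
        (let D = complex_of_real (\<gamma>/2) \<cdot>\<^sub>m D_mat ns hs;
             W = complex_of_real (1/\<gamma>) \<cdot>\<^sub>m W_mat zs ns vh;
             I = 1\<^sub>m (npts ns);
             yc = map_vec complex_of_real y
         in vnorm2 (commut D (commut D W) *\<^sub>v yc) \<le> c2 * vnorm2 (((D + I) * (D + I)) *\<^sub>v yc))"
    proof (intro exI[of _ "Cst 2"] allI impI)
      fix zs :: "(int^'d) list" and ns hs and y :: "real vec"
      assume H: "1 \<le> length ns \<and> canonical_lattice zs ns \<and> points_distinct zs ns \<and> min_anti_aliasing zs ns hs \<and> dim_vec y = npts ns"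
      define t where "t c = 2*pi^2*\<gamma>*real_of_int (isqnorm (hs c))" for c
      have "canonical_lattice zs ns" using H by (elim conjE) assumption
      then have pos: "posl ns" by (rule posl)
      note S = setup_mats[OF pos assms(1) t_def]
      show "let D = complex_of_real (\<gamma>/2) \<cdot>\<^sub>m D_mat ns hs;
             W = complex_of_real (1/\<gamma>) \<cdot>\<^sub>m W_mat zs ns vh;
             I = 1\<^sub>m (npts ns);
             yc = map_vec complex_of_real y
         in vnorm2 (commut D (commut D W) *\<^sub>v yc) \<le> Cst 2 * vnorm2 (((D + I) * (D + I)) *\<^sub>v yc)"
        unfolding Let_def S(2) S(4)
      proof (rule gen[where p=2 and t=t and ns=ns and zs=zs and hs=hs and y=y])
        show "2*\<alpha> - 4*real (2::nat) > 1" using a by simp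
        show "posl ns" by (rule pos)
        show "min_anti_aliasing zs ns hs" using H by (elim conjE) assumption
        show "dim_vec y = npts ns" using H by (elim conjE) assumption
        show "t c = 2*pi^2*\<gamma>*real_of_int (isqnorm (hs c))" for c by (rule t_def)
      qed
    qed
  qed
qed


end
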